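(* Let $F,G$ be continuous bivariate df's with marginal df's $F_i,G_i$, $i=1,2$, satisfying $\lim_{t\to\infty}\bar F_i(t)/\bar G_i(t)=1$, and assume $\lim_{n\to\infty}F_i^n(nx)=\Phi(x)$ for all $x\in\mathbb{R}$, $i=1,2$. Let $(X_1,X_2)$ have df $F$. Then the following are equivalent: (i) $\lim_{n\to\infty}n\,\mathbb{P}(X_1>nx_1,X_2>nx_2)=0$ for all $x_1,x_2\in(0,\infty)$; (ii) $\lim_{n\to\infty}n\,\mathbb{P}(X_1>n,X_2>n)=0$; (iii) $\lim_{n\to\infty}n\int_{\mathbb{R}^2}G^n(x_1,x_2)\,dF(x_1,x_2)=0$; (iv) $\lim_{n\to\infty}n\int_{\mathbb{R}^2}[1-F(x_1,x_2)]\,dG^n(x_1,x_2)=2$; (v) $\lim_{n\to\infty}n\,\mathbb{P}(G(X_1,X_2)>1-1/n)=0$.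
   Context: $\Phi(x)=e^{-1/x}$ for $x>0$ and $\Phi(x)=0$ for $x\le0$; $\bar F_i=1-F_i$, $\bar G_i=1-G_i$. *)

theory Defs
  imports "HOL-Probability.Probability"
begin

definition Phi :: "real \<Rightarrow> real" where
  "Phi x = (if x > 0 then exp (- 1 / x) else 0)"

definition bdf :: "(real \<times> real) measure \<Rightarrow> real \<times> real \<Rightarrow> real" where
  "bdf M x = measure M ({..fst x} \<times> {..snd x})"

definition marg1 :: "(real \<times> real) measure \<Rightarrow> real \<Rightarrow> real" where
  "marg1 M t = measure M ({..t} \<times> UNIV)"

definition marg2 :: "(real \<times> real) measure \<Rightarrow> real \<Rightarrow> real" where
  "marg2 M t = measure M (UNIV \<times> {..t})"

text \<open>The probability measure with df G^n: law of the componentwise maximum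
  of n independent copies of a random vector with law M.\<close>
definition maxpow :: "(real \<times> real) measure \<Rightarrow> nat \<Rightarrow> (real \<times> real) measure" where
  "maxpow M n = distr (PiM {..<n} (\<lambda>_. M)) borel
     (\<lambda>\<omega>. (MAX i\<in>{..<n}. fst (\<omega> i), MAX i\<in>{..<n}. snd (\<omega> i)))"

end

theory Submission
  imports Defs
begin

locale bm = fixes M :: "(real \<times> real) measure"
  assumes P: "prob_space M" and S: "sets M = sets borel"
begin

sublocale prob_space M by (rule P)

declare borel_comp[simp]

lemma fst_meas[measurable]: "fst \<in> borel_measurable M"
  unfolding measurable_cong_sets[OF S refl] by (rule borel_measurable_continuous_onI) (intro continuous_intros)
lemma snd_meas[measurable]: "snd \<in> borel_measurable M"
  unfolding measurable_cong_sets[OF S refl] by (rule borel_measurable_continuous_onI) (intro continuous_intros)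

lemma space_M[simp]: "space M = UNIV"
  using sets_eq_imp_space_eq[OF S] by simp

lemma sets_M[measurable]: "A \<in> sets borel \<Longrightarrow> A \<in> sets M"
  using S by simp

lemma times_borel'[intro, simp]: "(A::real set) \<in> sets borel \<Longrightarrow> (B::real set) \<in> sets borel \<Longrightarrow> A \<times> B \<in> sets (borel :: (real \<times> real) measure)"
  unfolding borel_prod[symmetric] by (rule pair_measureI)

lemma times_borel[intro, simp]: "(A::real set) \<in> sets borel \<Longrightarrow> (B::real set) \<in> sets borel \<Longrightarrow> A \<times> B \<in> sets M"
  by (rule sets_M) simp

lemma ev[intro,simp]: "A \<in> sets borel \<Longrightarrow> A \<in> events" using sets_M by simp

lemma compl: "A \<in> sets borel \<Longrightarrow> prob (- A) = 1 - prob A"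
  using prob_compl[of A] by (simp add: Compl_eq_Diff_UNIV)

lemma mono: "A \<in> sets borel \<Longrightarrow> B \<in> sets borel \<Longrightarrow> A \<subseteq> B \<Longrightarrow> prob A \<le> prob B"
  by (intro finite_measure_mono) auto

lemma bdf_le1: "bdf M x \<le> marg1 M (fst x)"
  unfolding bdf_def marg1_def by (intro mono) auto
lemma bdf_le2: "bdf M x \<le> marg2 M (snd x)"
  unfolding bdf_def marg2_def by (intro mono) auto
lemma bdf_nn: "0 \<le> bdf M x" unfolding bdf_def by simp
lemma marg1_nn: "0 \<le> marg1 M x" unfolding marg1_def by simp
lemma marg2_nn: "0 \<le> marg2 M x" unfolding marg2_def by simp
lemma marg1_le1: "marg1 M x \<le> 1" unfolding marg1_def by simp
lemma marg2_le1: "marg2 M x \<le> 1" unfolding marg2_def by simp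
lemma bdf_le_1: "bdf M x \<le> 1" unfolding bdf_def by simp
lemma marg1_mono: "a \<le> b \<Longrightarrow> marg1 M a \<le> marg1 M b"
  unfolding marg1_def by (intro mono) auto
lemma marg2_mono: "a \<le> b \<Longrightarrow> marg2 M a \<le> marg2 M b"
  unfolding marg2_def by (intro mono) auto

lemma compl_bdf: "1 - bdf M (a,b) \<le> (1 - marg1 M a) + (1 - marg2 M b)"
proof -
  have "1 - bdf M (a,b) = prob (- ({..a} \<times> {..b}))" unfolding bdf_def by (subst compl) auto
  also have "\<dots> \<le> prob ((-({..a} \<times> UNIV)) \<union> (-(UNIV \<times> {..b})))"
    by (intro mono) auto
  also have "\<dots> \<le> prob (-({..a} \<times> UNIV)) + prob (-(UNIV \<times> {..b}))"
    by (intro measure_Un_le) (auto intro!: borel_comp)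
  also have "\<dots> = (1 - marg1 M a) + (1 - marg2 M b)"
    unfolding marg1_def marg2_def by (subst compl, simp)+ simp
  finally show ?thesis .
qed

lemma marg1_bdf: "0 \<le> marg1 M a - bdf M (a,b)" "marg1 M a - bdf M (a,b) \<le> 1 - marg2 M b"
proof -
  show "0 \<le> marg1 M a - bdf M (a,b)" using bdf_le1[of "(a,b)"] by simp
  have "marg1 M a - bdf M (a,b) = prob ({..a} \<times> UNIV - {..a} \<times> {..b})"
    unfolding marg1_def bdf_def by (subst finite_measure_Diff) auto
  also have "\<dots> \<le> prob (-(UNIV \<times> {..b}))" by (intro mono) auto
  also have "\<dots> = 1 - marg2 M b" unfolding marg2_def by (subst compl) auto
  finally show "marg1 M a - bdf M (a,b) \<le> 1 - marg2 M b" .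
qed

lemma marg2_bdf: "0 \<le> marg2 M b - bdf M (a,b)" "marg2 M b - bdf M (a,b) \<le> 1 - marg1 M a"
proof -
  show "0 \<le> marg2 M b - bdf M (a,b)" using bdf_le2[of "(a,b)"] by simp
  have "marg2 M b - bdf M (a,b) = prob (UNIV \<times> {..b} - {..a} \<times> {..b})"
    unfolding marg2_def bdf_def by (subst finite_measure_Diff) auto
  also have "\<dots> \<le> prob (-({..a} \<times> UNIV))" by (intro mono) auto
  also have "\<dots> = 1 - marg1 M a" unfolding marg1_def by (subst compl) auto
  finally show "marg2 M b - bdf M (a,b) \<le> 1 - marg1 M a" .
qed

lemma marg1_cdf: "marg1 M = cdf (distr M borel fst)"
proof (rule ext)
  fix x
  have "fst -` {..x} \<inter> space M = {..x} \<times> UNIV" by auto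
  then show "marg1 M x = cdf (distr M borel fst) x"
    by (simp add: marg1_def cdf_def measure_distr)
qed

lemma marg2_cdf: "marg2 M = cdf (distr M borel snd)"
proof (rule ext)
  fix x
  have "snd -` {..x} \<inter> space M = UNIV \<times> {..x}" by auto
  then show "marg2 M x = cdf (distr M borel snd) x"
    by (simp add: marg2_def cdf_def measure_distr)
qed

lemma rd1: "real_distribution (distr M borel fst)"
  by (simp add: real_distribution_def real_distribution_axioms_def prob_space_distr fst_meas snd_meas)
lemma rd2: "real_distribution (distr M borel snd)"
  by (simp add: real_distribution_def real_distribution_axioms_def prob_space_distr fst_meas snd_meas)

lemma marg1_top: "(marg1 M \<longlongrightarrow> 1) at_top"
  unfolding marg1_cdf using real_distribution.cdf_lim_at_top_prob[OF rd1] .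
lemma marg2_top: "(marg2 M \<longlongrightarrow> 1) at_top"
  unfolding marg2_cdf using real_distribution.cdf_lim_at_top_prob[OF rd2] .

lemma marg1_cont: assumes C: "continuous_on UNIV (bdf M)" shows "continuous_on UNIV (marg1 M)"
  unfolding continuous_on_iff
proof (intro ballI allI impI)
  fix a e :: real assume e: "0<e"
  have "\<forall>\<^sub>F t in at_top. dist (marg2 M t) 1 < e/3"
    using marg2_top e unfolding tendsto_iff by (metis divide_pos_pos zero_less_numeral)
  then obtain b where b: "dist (marg2 M b) 1 < e/3" by (auto simp: eventually_at_top_linorder)
  have "continuous_on UNIV (\<lambda>x. bdf M (x,b))"
    by (rule continuous_on_compose2[OF C]) (auto intro: continuous_intros)
  then obtain d where d: "d>0" "\<forall>x'\<in>UNIV. dist x' a < d \<longrightarrow> dist (bdf M (x',b)) (bdf M (a,b)) < e/3"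
    using e unfolding continuous_on_iff by (metis UNIV_I divide_pos_pos zero_less_numeral)
  show "\<exists>d>0. \<forall>x'\<in>UNIV. dist x' a < d \<longrightarrow> dist (marg1 M x') (marg1 M a) < e"
  proof (intro exI conjI ballI impI)
    fix x' assume "dist x' a < d"
    then have 1: "\<bar>bdf M (x',b) - bdf M (a,b)\<bar> < e/3" using d by (auto simp: dist_real_def)
    have 2: "1 - marg2 M b < e/3" using b by (auto simp: dist_real_def abs_if split: if_splits)
    show "dist (marg1 M x') (marg1 M a) < e"
      using 1 2 marg1_bdf[of x' b] marg1_bdf[of a b] by (auto simp: dist_real_def abs_if split: if_splits)
  qed (rule d)
qed

lemma marg2_cont: assumes C: "continuous_on UNIV (bdf M)" shows "continuous_on UNIV (marg2 M)"
  unfolding continuous_on_iff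
proof (intro ballI allI impI)
  fix a e :: real assume e: "0<e"
  have "\<forall>\<^sub>F t in at_top. dist (marg1 M t) 1 < e/3"
    using marg1_top e unfolding tendsto_iff by (metis divide_pos_pos zero_less_numeral)
  then obtain b where b: "dist (marg1 M b) 1 < e/3" by (auto simp: eventually_at_top_linorder)
  have "continuous_on UNIV (\<lambda>x. bdf M (b,x))"
    by (rule continuous_on_compose2[OF C]) (auto intro: continuous_intros)
  then obtain d where d: "d>0" "\<forall>x'\<in>UNIV. dist x' a < d \<longrightarrow> dist (bdf M (b,x')) (bdf M (b,a)) < e/3"
    using e unfolding continuous_on_iff by (metis UNIV_I divide_pos_pos zero_less_numeral)
  show "\<exists>d>0. \<forall>x'\<in>UNIV. dist x' a < d \<longrightarrow> dist (marg2 M x') (marg2 M a) < e"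
  proof (intro exI conjI ballI impI)
    fix x' assume "dist x' a < d"
    then have 1: "\<bar>bdf M (b,x') - bdf M (b,a)\<bar> < e/3" using d by (auto simp: dist_real_def)
    have 2: "1 - marg1 M b < e/3" using b by (auto simp: dist_real_def abs_if split: if_splits)
    show "dist (marg2 M x') (marg2 M a) < e"
      using 1 2 marg2_bdf[of x' b] marg2_bdf[of a b] by (auto simp: dist_real_def abs_if split: if_splits)
  qed (rule d)
qed

lemma strict_bdf: assumes C: "continuous_on UNIV (bdf M)"
  shows "prob ({..<a} \<times> {..<b}) = bdf M (a,b)"
proof (rule antisym)
  show "prob ({..<a} \<times> {..<b}) \<le> bdf M (a,b)" unfolding bdf_def by (intro mono) auto
  have lim: "((\<lambda>h. bdf M (a-h,b-h)) \<longlongrightarrow> bdf M (a-0,b-0)) (at_right 0)"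
    by (intro continuous_on_tendsto_compose[OF C] tendsto_intros) auto
  show "bdf M (a,b) \<le> prob ({..<a} \<times> {..<b})"
  proof (rule tendsto_le[OF _ tendsto_const])
    show "((\<lambda>h. bdf M (a-h,b-h)) \<longlongrightarrow> bdf M (a,b)) (at_right 0)" using lim by simp
    show "\<forall>\<^sub>F h in at_right 0. bdf M (a-h,b-h) \<le> prob ({..<a} \<times> {..<b})"
      using eventually_at_right_less[of "0::real"]
      by eventually_elim (auto simp: bdf_def intro!: mono)
  qed simp
qed

lemma strict_marg1: assumes C: "continuous_on UNIV (bdf M)"
  shows "prob ({..<a} \<times> UNIV) = marg1 M a"
proof (rule antisym)
  show "prob ({..<a} \<times> UNIV) \<le> marg1 M a" unfolding marg1_def by (intro mono) auto
  have lim: "((\<lambda>h. marg1 M (a-h)) \<longlongrightarrow> marg1 M (a-0)) (at_right 0)"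
    by (intro continuous_on_tendsto_compose[OF marg1_cont[OF C]] tendsto_intros) auto
  show "marg1 M a \<le> prob ({..<a} \<times> UNIV)"
  proof (rule tendsto_le[OF _ tendsto_const])
    show "((\<lambda>h. marg1 M (a-h)) \<longlongrightarrow> marg1 M a) (at_right 0)" using lim by simp
    show "\<forall>\<^sub>F h in at_right 0. marg1 M (a-h) \<le> prob ({..<a} \<times> UNIV)"
      using eventually_at_right_less[of "0::real"]
      by eventually_elim (auto simp: marg1_def intro!: mono)
  qed simp
qed

lemma strict_marg2: assumes C: "continuous_on UNIV (bdf M)"
  shows "prob (UNIV \<times> {..<a}) = marg2 M a"
proof (rule antisym)
  show "prob (UNIV \<times> {..<a}) \<le> marg2 M a" unfolding marg2_def by (intro mono) auto
  have lim: "((\<lambda>h. marg2 M (a-h)) \<longlongrightarrow> marg2 M (a-0)) (at_right 0)"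
    by (intro continuous_on_tendsto_compose[OF marg2_cont[OF C]] tendsto_intros) auto
  show "marg2 M a \<le> prob (UNIV \<times> {..<a})"
  proof (rule tendsto_le[OF _ tendsto_const])
    show "((\<lambda>h. marg2 M (a-h)) \<longlongrightarrow> marg2 M a) (at_right 0)" using lim by simp
    show "\<forall>\<^sub>F h in at_right 0. marg2 M (a-h) \<le> prob (UNIV \<times> {..<a})"
      using eventually_at_right_less[of "0::real"]
      by eventually_elim (auto simp: marg2_def intro!: mono)
  qed simp
qed

end

lemma scale_at_top:
  fixes h :: "real \<Rightarrow> real"
  assumes anti: "\<And>s t. s \<le> t \<Longrightarrow> h t \<le> h s" and nn: "\<And>t. 0 \<le> h t" and c: "c > 0"
  and lim: "(\<lambda>n::nat. real n * h (real n * c)) \<longlonglongrightarrow> 0"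
  shows "((\<lambda>t. t * h t) \<longlongrightarrow> 0) at_top"
proof -
  define N where "N t = nat \<lfloor>t / c\<rfloor>" for t
  have fN: "filterlim N sequentially at_top"
    unfolding filterlim_at_top eventually_sequentially
  proof (intro allI)
    fix Z :: nat
    show "\<forall>\<^sub>F t in at_top. Z \<le> N t"
      unfolding eventually_at_top_linorder
    proof (intro exI allI impI)
      fix t assume "c * real Z \<le> t"
      then have "real Z \<le> t / c" using c by (simp add: field_simps)
      then show "Z \<le> N t" unfolding N_def by linarith
    qed
  qed
  have g: "((\<lambda>t. 2 * c * (real (N t) * h (real (N t) * c))) \<longlongrightarrow> 2 * c * 0) at_top"
    by (intro tendsto_mult_left filterlim_compose[OF lim fN])
  show ?thesis
  proof (rule tendsto_sandwich[OF _ _ tendsto_const g[simplified]])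
    show "\<forall>\<^sub>F t in at_top. 0 \<le> t * h t"
      using eventually_ge_at_top[of 0] by eventually_elim (simp add: nn)
    show "\<forall>\<^sub>F t in at_top. t * h t \<le> 2 * c * (real (N t) * h (real (N t) * c))"
      using eventually_ge_at_top[of c]
    proof eventually_elim
      case (elim t)
      have t0: "t > 0" using elim c by simp
      have fl: "1 \<le> t / c" using elim c by (simp add: field_simps)
      have F1: "1 \<le> \<lfloor>t/c\<rfloor>" using fl by simp
      have NE: "real (N t) = real_of_int \<lfloor>t/c\<rfloor>" unfolding N_def using F1 by simp
      have N1: "1 \<le> real (N t)" unfolding NE using F1 by linarith
      have Nle: "real (N t) \<le> t / c" unfolding NE by linarith
      have Ngt: "t / c < real (N t) + 1" unfolding NE by linarith
      have h1: "h t \<le> h (real (N t) * c)" using Nle c by (intro anti) (simp add: field_simps)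
      have "t < c * (real (N t) + 1)" using Ngt c by (simp add: field_simps)
      moreover have "c * (real (N t) + 1) \<le> c * (2 * real (N t))" using N1 c by (intro mult_left_mono) auto
      ultimately have t2: "t \<le> 2 * c * real (N t)" by simp
      have "t * h t \<le> (2 * c * real (N t)) * h t" using t2 nn[of t] by (intro mult_right_mono) auto
      also have "\<dots> \<le> (2 * c * real (N t)) * h (real (N t) * c)"
        using h1 c N1 by (intro mult_left_mono) auto
      finally show ?case by (simp add: algebra_simps)
    qed
  qed
qed

lemma scale_seq:
  fixes h :: "real \<Rightarrow> real"
  assumes lim: "((\<lambda>t. t * h t) \<longlongrightarrow> 0) at_top" and d: "d > 0"
  shows "(\<lambda>n::nat. real n * h (real n * d)) \<longlonglongrightarrow> 0"
proof -
  have f: "filterlim (\<lambda>n::nat. real n * d) at_top sequentially"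
    unfolding filterlim_at_top eventually_sequentially
  proof (intro allI exI allI impI)
    fix Z :: real and n :: nat assume "nat \<lceil>Z / d\<rceil> \<le> n"
    then have "Z / d \<le> real n" by linarith
    then show "Z \<le> real n * d" using d by (simp add: field_simps)
  qed
  have "(\<lambda>n::nat. (1/d) * ((real n * d) * h (real n * d))) \<longlonglongrightarrow> (1/d) * 0"
    by (intro tendsto_mult_left filterlim_compose[OF lim f])
  then show ?thesis using d by simp
qed

lemma exp_lb: fixes u :: real assumes "0 \<le> u" "u \<le> 1/2" shows "exp (-2*u) \<le> 1 - u"
proof -
  have "1 + 2*u \<le> exp (2*u)" by (rule exp_ge_add_one_self)
  then have "exp (-2*u) \<le> 1 / (1 + 2*u)" using assms
    by (simp add: exp_minus field_simps)
  also have "\<dots> \<le> 1 - u"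
  proof -
    have "1 \<le> (1 - u) * (1 + 2*u)" using mult_nonneg_nonneg[of u "1-2*u"] assms by (simp add: algebra_simps)
    then show ?thesis using assms by (simp add: divide_le_eq)
  qed
  finally show ?thesis .
qed

lemma pow_lb: assumes "0 \<le> u" "u \<le> 1/2" shows "exp (-2 * real n * u) \<le> (1-u)^n"
proof -
  have "exp (-2 * real n * u) = exp (-2*u) ^ n" by (simp add: exp_of_nat_mult[symmetric] algebra_simps)
  also have "\<dots> \<le> (1-u)^n" using exp_lb[OF assms] by (intro power_mono) auto
  finally show ?thesis .
qed

lemma pow_ub: assumes "0 \<le> u" "u \<le> 1" shows "(1-u)^n \<le> exp (- real n * u)"
proof -
  have "1 - u \<le> exp (-u)" using exp_ge_add_one_self[of "-u"] by simp
  then have "(1-u)^n \<le> exp (-u) ^ n" using assms by (intro power_mono) auto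
  also have "\<dots> = exp (- real n * u)" by (simp add: exp_of_nat_mult[symmetric] algebra_simps)
  finally show ?thesis .
qed

lemma filterlim_mult_c: assumes d: "d > 0" shows "filterlim (\<lambda>n::nat. real n * d) at_top sequentially"
    unfolding filterlim_at_top eventually_sequentially
  proof (intro allI exI allI impI)
    fix Z :: real and n :: nat assume "nat \<lceil>Z / d\<rceil> \<le> n"
    then have "Z / d \<le> real n" by linarith
    then show "Z \<le> real n * d" using d by (simp add: field_simps)
  qed

lemma tailF_T1:
  fixes F1 :: "real \<Rightarrow> real"
  assumes b: "\<And>t. 0 \<le> F1 t" "\<And>t. F1 t \<le> 1"
    and lim: "(\<lambda>n::nat. F1 (real n * (1/10)) ^ n) \<longlonglongrightarrow> exp (-10)"
  shows "\<forall>\<^sub>F n in sequentially. 3/2 \<le> real n * (1 - F1 (real n * (1/10)))"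
proof -
  have "\<forall>\<^sub>F n in sequentially. F1 (real n * (1/10)) ^ n < exp (-3)"
    by (rule order_tendstoD(2)[OF lim]) simp
  moreover have "\<forall>\<^sub>F n in sequentially. 3 \<le> n" by (rule eventually_ge_at_top)
  ultimately show ?thesis
  proof eventually_elim
    case (elim n)
    define u where "u = 1 - F1 (real n * (1/10))"
    have u: "0 \<le> u" "u \<le> 1" using b unfolding u_def by (auto simp: algebra_simps)
    have pw: "(1 - u)^n < exp (-3)" using elim(1) unfolding u_def by simp
    show ?case unfolding u_def[symmetric]
    proof (rule ccontr)
      assume "\<not> 3/2 \<le> real n * u"
      then have nu: "real n * u < 3/2" by simp
      have "u \<le> 1/2"
      proof (rule ccontr)
        assume "\<not> u \<le> 1/2"
        then have "real n * u \<ge> 3 * (1/2)" using elim(2) by (intro mult_mono) auto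
        then show False using nu by simp
      qed
      then have "exp (-2 * real n * u) \<le> (1-u)^n" using u by (intro pow_lb) auto
      then have "exp (-2*real n*u) < exp (-3)" using pw by linarith
      then have "3 < 2 * real n * u" by simp
      then show False using nu by simp
    qed
  qed
qed

lemma tailF_T2:
  fixes F1 :: "real \<Rightarrow> real"
  assumes b: "\<And>t. 0 \<le> F1 t" "\<And>t. F1 t \<le> 1"
    and lim: "(\<lambda>n::nat. F1 (real n * 10) ^ n) \<longlonglongrightarrow> exp (-1/10)"
  shows "\<forall>\<^sub>F n in sequentially. real n * (1 - F1 (real n * 10)) < 1/4"
proof -
  have "\<forall>\<^sub>F n in sequentially. exp (-1/4) < F1 (real n * 10) ^ n"
    by (rule order_tendstoD(1)[OF lim]) simp
  then show ?thesis
  proof eventually_elim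
    case (elim n)
    define u where "u = 1 - F1 (real n * 10)"
    have u: "0 \<le> u" "u \<le> 1" using b unfolding u_def by (auto simp: algebra_simps)
    have pw: "exp (-1/4) < (1 - u)^n" using elim(1) unfolding u_def by simp
    show ?case unfolding u_def[symmetric]
    proof (rule ccontr)
      assume "\<not> real n * u < 1/4"
      have pu: "(1-u)^n \<le> exp (-(real n * u))" using pow_ub[OF u, of n] by simp
      have "exp (-1/4) < exp (-(real n * u))" using pw pu by (meson less_le_trans)
      then have "real n * u < 1/4" by simp
      then show False using \<open>\<not> real n * u < 1/4\<close> by simp
    qed
  qed
qed

lemma ratio_ev:
  fixes Fb Gb :: "real \<Rightarrow> real"
  assumes nn: "\<And>t. 0 \<le> Gb t" and lim: "((\<lambda>t. Fb t / Gb t) \<longlongrightarrow> 1) at_top"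
  shows "\<forall>\<^sub>F t in at_top. 0 < Gb t \<and> Fb t \<le> 3/2 * Gb t \<and> Gb t \<le> 2 * Fb t"
proof -
  have "\<forall>\<^sub>F t in at_top. 1/2 < Fb t / Gb t" by (rule order_tendstoD(1)[OF lim]) simp
  moreover have "\<forall>\<^sub>F t in at_top. Fb t / Gb t < 3/2" by (rule order_tendstoD(2)[OF lim]) simp
  ultimately show ?thesis
  proof eventually_elim
    case (elim t)
    have "Gb t \<noteq> 0" using elim(1) by auto
    then have g: "0 < Gb t" using nn[of t] by simp
    then show ?case using elim by (auto simp: field_simps)
  qed
qed

lemma tailG:
  fixes F1 G1 :: "real \<Rightarrow> real"
  assumes b: "\<And>t. 0 \<le> F1 t" "\<And>t. F1 t \<le> 1" "\<And>t. G1 t \<le> 1"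
    and dom: "\<And>x. (\<lambda>n::nat. F1 (real n * x) ^ n) \<longlonglongrightarrow> Phi x"
    and tail: "((\<lambda>t. (1 - F1 t) / (1 - G1 t)) \<longlongrightarrow> 1) at_top"
  shows "\<forall>\<^sub>F n in sequentially. 1 \<le> real n * (1 - G1 (real n * (1/10)))"
    and "\<forall>\<^sub>F n in sequentially. real n * (1 - G1 (real n * 10)) < 1/2"
proof -
  have r: "\<forall>\<^sub>F t in at_top. 0 < 1 - G1 t \<and> 1 - F1 t \<le> 3/2 * (1 - G1 t) \<and> 1 - G1 t \<le> 2 * (1 - F1 t)"
    by (rule ratio_ev[OF _ tail]) (use b in auto)
  have r1: "\<forall>\<^sub>F n in sequentially. 0 < 1 - G1 (real n * (1/10)) \<and> 1 - F1 (real n * (1/10)) \<le> 3/2 * (1 - G1 (real n * (1/10))) \<and> 1 - G1 (real n * (1/10)) \<le> 2 * (1 - F1 (real n * (1/10)))"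
    using filterlim_iff[THEN iffD1, OF filterlim_mult_c[of "1/10"], rule_format, OF _ r] by simp
  have r2: "\<forall>\<^sub>F n in sequentially. 0 < 1 - G1 (real n * 10) \<and> 1 - F1 (real n * 10) \<le> 3/2 * (1 - G1 (real n * 10)) \<and> 1 - G1 (real n * 10) \<le> 2 * (1 - F1 (real n * 10))"
    using filterlim_iff[THEN iffD1, OF filterlim_mult_c[of "10"], rule_format, OF _ r] by simp
  have t1: "\<forall>\<^sub>F n in sequentially. 3/2 \<le> real n * (1 - F1 (real n * (1/10)))"
    by (rule tailF_T1[OF b(1,2)]) (use dom[of "1/10"] in \<open>simp add: Phi_def\<close>)
  have t2: "\<forall>\<^sub>F n in sequentially. real n * (1 - F1 (real n * 10)) < 1/4"
    by (rule tailF_T2[OF b(1,2)]) (use dom[of "10"] in \<open>simp add: Phi_def\<close>)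
  show "\<forall>\<^sub>F n in sequentially. 1 \<le> real n * (1 - G1 (real n * (1/10)))"
    using r1 t1
  proof eventually_elim
    case (elim n)
    have "3/2 \<le> real n * (3/2 * (1 - G1 (real n * (1/10))))"
      using elim by (smt (verit) mult_left_mono of_nat_0_le_iff)
    moreover have "real n * (3/2 * (1 - G1 (real n * (1/10)))) = 3/2 * (real n * (1 - G1 (real n * (1/10))))"
      by (simp add: algebra_simps)
    ultimately show ?case by linarith
  qed
  show "\<forall>\<^sub>F n in sequentially. real n * (1 - G1 (real n * 10)) < 1/2"
    using r2 t2
  proof eventually_elim
    case (elim n)
    have "real n * (1 - G1 (real n * 10)) \<le> real n * (2 * (1 - F1 (real n * 10)))"
      using elim by (intro mult_left_mono) auto
    moreover have "real n * (2 * (1 - F1 (real n * 10))) = 2 * (real n * (1 - F1 (real n * 10)))" by simp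
    ultimately show ?case using elim by linarith
  qed
qed

context bm begin

lemma h_anti: "s \<le> t \<Longrightarrow> prob ({t<..} \<times> {t<..}) \<le> prob ({s<..} \<times> {s<..})"
  by (intro mono) auto

lemma i_ii:
  "(\<forall>x1 x2. x1 > 0 \<longrightarrow> x2 > 0 \<longrightarrow>
        (\<lambda>n::nat. real n * prob ({real n * x1<..} \<times> {real n * x2<..})) \<longlonglongrightarrow> 0)
      \<longleftrightarrow> (\<lambda>n::nat. real n * prob ({real n<..} \<times> {real n<..})) \<longlonglongrightarrow> 0"
proof
  assume "\<forall>x1 x2. x1 > 0 \<longrightarrow> x2 > 0 \<longrightarrow>
        (\<lambda>n::nat. real n * prob ({real n * x1<..} \<times> {real n * x2<..})) \<longlonglongrightarrow> 0"
  from this[rule_format, of 1 1] show "(\<lambda>n::nat. real n * prob ({real n<..} \<times> {real n<..})) \<longlonglongrightarrow> 0" by simp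
next
  assume a: "(\<lambda>n::nat. real n * prob ({real n<..} \<times> {real n<..})) \<longlonglongrightarrow> 0"
  have at: "((\<lambda>t. t * prob ({t<..} \<times> {t<..})) \<longlongrightarrow> 0) at_top"
    by (rule scale_at_top[where c=1]) (use a h_anti in auto)
  show "\<forall>x1 x2. x1 > 0 \<longrightarrow> x2 > 0 \<longrightarrow>
        (\<lambda>n::nat. real n * prob ({real n * x1<..} \<times> {real n * x2<..})) \<longlonglongrightarrow> 0"
  proof (intro allI impI)
    fix x1 x2 :: real assume x: "x1 > 0" "x2 > 0"
    define m where "m = min x1 x2"
    have m: "m > 0" using x by (simp add: m_def)
    have l: "(\<lambda>n::nat. real n * prob ({real n * m<..} \<times> {real n * m<..})) \<longlonglongrightarrow> 0"
      by (rule scale_seq[OF at m])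
    show "(\<lambda>n::nat. real n * prob ({real n * x1<..} \<times> {real n * x2<..})) \<longlonglongrightarrow> 0"
    proof (rule tendsto_sandwich[OF _ _ tendsto_const l])
      show "\<forall>\<^sub>F n in sequentially. 0 \<le> real n * prob ({real n * x1<..} \<times> {real n * x2<..})" by simp
      show "\<forall>\<^sub>F n in sequentially. real n * prob ({real n * x1<..} \<times> {real n * x2<..}) \<le> real n * prob ({real n * m<..} \<times> {real n * m<..})"
      proof (intro always_eventually allI mult_left_mono mono)
        fix n :: nat
        have "real n * m \<le> real n * x1" "real n * m \<le> real n * x2" unfolding m_def
          by (auto intro: mult_left_mono)
        then show "{real n * x1<..} \<times> {real n * x2<..} \<subseteq> {real n * m<..} \<times> {real n * m<..}" by auto
      qed auto
    qed
  qed
qed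

end

lemma ii_v:
  assumes F: "bm F" and G: "bm G" and GC: "continuous_on UNIV (bdf G)"
  and T1: "\<forall>\<^sub>F n in sequentially. 1 \<le> real n * (1 - marg1 G (real n * (1/10)))"
          "\<forall>\<^sub>F n in sequentially. 1 \<le> real n * (1 - marg2 G (real n * (1/10)))"
  and T2: "\<forall>\<^sub>F n in sequentially. real n * (1 - marg1 G (real n * 10)) < 1/2"
          "\<forall>\<^sub>F n in sequentially. real n * (1 - marg2 G (real n * 10)) < 1/2"
  shows "(\<lambda>n::nat. real n * measure F ({real n<..} \<times> {real n<..})) \<longlonglongrightarrow> 0
      \<longleftrightarrow> (\<lambda>n::nat. real n * measure F {x. bdf G x > 1 - 1 / real n}) \<longlonglongrightarrow> 0"
proof -
  interpret F: bm F by (rule F)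
  interpret G: bm G by (rule G)
  have Vb: "{x. bdf G x > c} \<in> sets borel" for c
    by (rule borel_open) (intro open_Collect_less continuous_intros GC)
  show ?thesis
  proof
    assume a: "(\<lambda>n::nat. real n * measure F ({real n<..} \<times> {real n<..})) \<longlonglongrightarrow> 0"
    have at: "((\<lambda>t. t * measure F ({t<..} \<times> {t<..})) \<longlongrightarrow> 0) at_top"
      by (rule scale_at_top[where c=1]) (use a F.h_anti in auto)
    have l: "(\<lambda>n::nat. real n * measure F ({real n * (1/10)<..} \<times> {real n * (1/10)<..})) \<longlonglongrightarrow> 0"
      by (rule scale_seq[OF at]) simp
    show "(\<lambda>n::nat. real n * measure F {x. bdf G x > 1 - 1 / real n}) \<longlonglongrightarrow> 0"
    proof (rule tendsto_sandwich[OF _ _ tendsto_const l])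
      show "\<forall>\<^sub>F n in sequentially. 0 \<le> real n * measure F {x. bdf G x > 1 - 1 / real n}" by simp
      show "\<forall>\<^sub>F n in sequentially. real n * measure F {x. bdf G x > 1 - 1 / real n}
         \<le> real n * measure F ({real n * (1/10)<..} \<times> {real n * (1/10)<..})"
        using T1
      proof eventually_elim
        case (elim n)
        have n0: "real n > 0" using elim(1) by (cases "n = 0") auto
        have sub: "{x. bdf G x > 1 - 1 / real n} \<subseteq> {real n * (1/10)<..} \<times> {real n * (1/10)<..}"
        proof
          fix x assume x: "x \<in> {x. bdf G x > 1 - 1 / real n}"
          obtain a b where ab: "x = (a,b)" by force
          have g: "1 - bdf G (a,b) < 1 / real n" using x ab by simp
          have "real n * (1/10) < a"
          proof (rule ccontr)
            assume "\<not> real n * (1/10) < a"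
            then have "1 - marg1 G (real n * (1/10)) \<le> 1 - marg1 G a" using G.marg1_mono by simp
            moreover have "1 - marg1 G a \<le> 1 - bdf G (a,b)" using G.bdf_le1[of "(a,b)"] by simp
            ultimately have "1 - marg1 G (real n * (1/10)) < 1 / real n" using g by simp
            then have "real n * (1 - marg1 G (real n * (1/10))) < 1" using n0 by (simp add: field_simps)
            then show False using elim(1) by simp
          qed
          moreover have "real n * (1/10) < b"
          proof (rule ccontr)
            assume "\<not> real n * (1/10) < b"
            then have "1 - marg2 G (real n * (1/10)) \<le> 1 - marg2 G b" using G.marg2_mono by simp
            moreover have "1 - marg2 G b \<le> 1 - bdf G (a,b)" using G.bdf_le2[of "(a,b)"] by simp
            ultimately have "1 - marg2 G (real n * (1/10)) < 1 / real n" using g by simp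
            then have "real n * (1 - marg2 G (real n * (1/10))) < 1" using n0 by (simp add: field_simps)
            then show False using elim(2) by simp
          qed
          ultimately show "x \<in> {real n * (1/10)<..} \<times> {real n * (1/10)<..}" using ab by simp
        qed
        show ?case using sub by (intro mult_left_mono F.mono Vb) auto
      qed
    qed
  next
    assume a: "(\<lambda>n::nat. real n * measure F {x. bdf G x > 1 - 1 / real n}) \<longlonglongrightarrow> 0"
    have l: "(\<lambda>n::nat. real n * measure F ({real n * 10<..} \<times> {real n * 10<..})) \<longlonglongrightarrow> 0"
    proof (rule tendsto_sandwich[OF _ _ tendsto_const a])
      show "\<forall>\<^sub>F n in sequentially. 0 \<le> real n * measure F ({real n * 10<..} \<times> {real n * 10<..})" by simp
      show "\<forall>\<^sub>F n in sequentially. real n * measure F ({real n * 10<..} \<times> {real n * 10<..})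
         \<le> real n * measure F {x. bdf G x > 1 - 1 / real n}"
        using T2 eventually_gt_at_top[of "0::nat"]
      proof eventually_elim
        case (elim n)
        have n0: "real n > 0" using elim(3) by simp
        have sub: "{real n * 10<..} \<times> {real n * 10<..} \<subseteq> {x. bdf G x > 1 - 1 / real n}"
        proof
          fix x assume x: "x \<in> {real n * 10<..} \<times> {real n * 10<..}"
          obtain a b where ab: "x = (a,b)" by force
          have "1 - marg1 G a \<le> 1 - marg1 G (real n * 10)" using x ab G.marg1_mono by simp
          moreover have "1 - marg2 G b \<le> 1 - marg2 G (real n * 10)" using x ab G.marg2_mono by simp
          moreover have "(1 - marg1 G (real n * 10)) < 1 / (2 * real n)"
            using elim(1) n0 by (simp add: field_simps)
          moreover have "(1 - marg2 G (real n * 10)) < 1 / (2 * real n)"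
            using elim(2) n0 by (simp add: field_simps)
          ultimately have "1 - bdf G (a,b) < 1 / real n"
            using G.compl_bdf[of a b] by (simp add: field_simps)
          then show "x \<in> {x. bdf G x > 1 - 1 / real n}" using ab by simp
        qed
        show ?case using sub by (intro mult_left_mono F.mono Vb) auto
      qed
    qed
    have at: "((\<lambda>t. t * measure F ({t<..} \<times> {t<..})) \<longlongrightarrow> 0) at_top"
      by (rule scale_at_top[where c=10]) (use l F.h_anti in auto)
    show "(\<lambda>n::nat. real n * measure F ({real n<..} \<times> {real n<..})) \<longlonglongrightarrow> 0"
      using scale_seq[OF at, of 1] by simp
  qed
qed

lemma layer:
  fixes M :: "'a measure" and U :: "'a \<Rightarrow> real"
  assumes P: "prob_space M" and Um[measurable]: "U \<in> borel_measurable M"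
  and U01: "\<And>x. x \<in> space M \<Longrightarrow> 0 \<le> U x \<and> U x \<le> 1"
  shows "(\<integral>\<^sup>+x. ennreal ((1 - U x) ^ Suc m) \<partial>M) =
     (\<integral>\<^sup>+v. ennreal (real (Suc m) * (1-v)^m) * indicator {0..1} v * emeasure M {x\<in>space M. U x \<le> v} \<partial>lborel)"
proof -
  interpret pair_sigma_finite M lborel
    unfolding pair_sigma_finite_def using P
    by (auto intro: prob_space_imp_sigma_finite lborel.sigma_finite_measure_axioms)
  define K where "K v = real (Suc m) * (1-v)^m" for v :: real
  have pt: "ennreal ((1-u)^Suc m) = (\<integral>\<^sup>+v. ennreal (K v) * indicator {u..1} v \<partial>lborel)"
    if "0 \<le> u" "u \<le> 1" for u :: real
  proof -
    have "(\<integral>\<^sup>+v. ennreal (K v) * indicator {u..1} v \<partial>lborel) = ennreal ((-((1-1)^Suc m)) - (-((1-u)^Suc m)))"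
    proof (rule nn_integral_FTC_Icc)
      show "K \<in> borel_measurable borel" unfolding K_def by measurable
      fix v assume v: "v \<in> {u..1}"
      show "((\<lambda>v. -((1-v)^Suc m)) has_real_derivative K v) (at v)"
        unfolding K_def by (auto intro!: derivative_eq_intros) (cases m, auto simp: algebra_simps)
      show "0 \<le> K v" unfolding K_def using v by auto
    qed (use that in auto)
    then show ?thesis by simp
  qed
  define f where "f x v = ennreal (K v) * indicator {0..1} v * (if U x \<le> v then 1 else 0)" for x v
  have fm: "case_prod f \<in> borel_measurable (M \<Otimes>\<^sub>M lborel)"
    unfolding f_def K_def by measurable
  have "(\<integral>\<^sup>+x. ennreal ((1 - U x) ^ Suc m) \<partial>M) = (\<integral>\<^sup>+x. (\<integral>\<^sup>+v. f x v \<partial>lborel) \<partial>M)"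
  proof (rule nn_integral_cong)
    fix x assume x: "x \<in> space M"
    have "ennreal ((1 - U x) ^ Suc m) = (\<integral>\<^sup>+v. ennreal (K v) * indicator {U x..1} v \<partial>lborel)"
      using U01[OF x] by (intro pt) auto
    also have "\<dots> = (\<integral>\<^sup>+v. f x v \<partial>lborel)"
      using U01[OF x] by (intro nn_integral_cong) (auto simp: f_def indicator_def)
    finally show "ennreal ((1 - U x) ^ Suc m) = (\<integral>\<^sup>+v. f x v \<partial>lborel)" .
  qed
  also have "\<dots> = (\<integral>\<^sup>+v. (\<integral>\<^sup>+x. f x v \<partial>M) \<partial>lborel)"
    by (rule Fubini'[OF fm, symmetric])
  also have "\<dots> = (\<integral>\<^sup>+v. ennreal (K v) * indicator {0..1} v * emeasure M {x\<in>space M. U x \<le> v} \<partial>lborel)"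
  proof (rule nn_integral_cong)
    fix v :: real
    have "(\<integral>\<^sup>+x. f x v \<partial>M) = (\<integral>\<^sup>+x. (ennreal (K v) * indicator {0..1} v) * indicator {x\<in>space M. U x \<le> v} x \<partial>M)"
      by (intro nn_integral_cong) (auto simp: f_def indicator_def)
    also have "\<dots> = (ennreal (K v) * indicator {0..1} v) * emeasure M {x\<in>space M. U x \<le> v}"
      by (rule nn_integral_cmult_indicator) measurable
    finally show "(\<integral>\<^sup>+x. f x v \<partial>M) = ennreal (K v) * indicator {0..1} v * emeasure M {x\<in>space M. U x \<le> v}" .
  qed
  finally show ?thesis unfolding K_def .
qed


lemma Phi1_deriv: "((\<lambda>v::real. -((1-v)^Suc m * v) - (1-v)^Suc (Suc m) / real (Suc (Suc m))) has_real_derivative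
     real (Suc m) * (1-v)^m * v) (at v)"
  apply (rule derivative_eq_intros refl)+
    apply simp
   apply (rule refl)
  apply (simp add: power2_eq_square[symmetric])
  apply (simp add: power2_eq_square)
  done

lemma K_deriv: "((\<lambda>v::real. -((1-v)^Suc m)) has_real_derivative real (Suc m) * (1-v)^m) (at v)"
  by (auto intro!: derivative_eq_intros) (cases m, auto simp: algebra_simps)

lemma layer_bounds:
  fixes M :: "'a measure" and U :: "'a \<Rightarrow> real"
  assumes P: "prob_space M" and Um[measurable]: "U \<in> borel_measurable M"
  and U01: "\<And>x. x \<in> space M \<Longrightarrow> 0 \<le> U x \<and> U x \<le> 1"
  and d: "0 < \<delta>" "\<delta> \<le> 1"
  shows "(\<forall>v. 0 \<le> v \<and> v \<le> \<delta> \<longrightarrow> measure M {x\<in>space M. U x \<le> v} \<le> a * v) \<Longrightarrow> 0 \<le> a \<Longrightarrow>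
      (\<integral>x. (1 - U x)^Suc m \<partial>M) \<le> a / real (Suc (Suc m)) + (1-\<delta>)^Suc m"
   and "(\<forall>v. 0 \<le> v \<and> v \<le> \<delta> \<longrightarrow> b * v \<le> measure M {x\<in>space M. U x \<le> v}) \<Longrightarrow> 0 \<le> b \<Longrightarrow>
      b * (1 / real (Suc (Suc m)) - (1-\<delta>)^Suc m * \<delta> - (1-\<delta>)^Suc (Suc m) / real (Suc (Suc m)))
        \<le> (\<integral>x. (1 - U x)^Suc m \<partial>M)"
proof -
  interpret prob_space M by (rule P)
  define K where "K v = real (Suc m) * (1-v)^m" for v :: real
  define q where "q v = measure M {x\<in>space M. U x \<le> v}" for v
  define E where "E = (\<integral>x. (1 - U x)^Suc m \<partial>M)"
  have int: "integrable M (\<lambda>x. (1 - U x)^Suc m)"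
  proof (rule integrable_const_bound[where B=1])
    show "AE x in M. norm ((1 - U x) ^ Suc m) \<le> 1"
      using U01 by (intro AE_I2) (auto simp del: power_Suc intro!: power_le_one)
  qed measurable
  have E0: "0 \<le> E" unfolding E_def using U01 by (intro integral_nonneg_AE AE_I2) auto
  have eE: "ennreal E = (\<integral>\<^sup>+v. ennreal (K v) * indicator {0..1} v * ennreal (q v) \<partial>lborel)"
  proof -
    have "ennreal E = (\<integral>\<^sup>+x. ennreal ((1 - U x) ^ Suc m) \<partial>M)"
      unfolding E_def using U01 by (intro nn_integral_eq_integral[symmetric] int AE_I2) auto
    also have "\<dots> = (\<integral>\<^sup>+v. ennreal (K v) * indicator {0..1} v * emeasure M {x\<in>space M. U x \<le> v} \<partial>lborel)"
      unfolding K_def by (rule layer[OF P Um U01])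
    also have "\<dots> = (\<integral>\<^sup>+v. ennreal (K v) * indicator {0..1} v * ennreal (q v) \<partial>lborel)"
      unfolding q_def by (simp add: emeasure_eq_measure)
    finally show ?thesis .
  qed
  have K0: "0 \<le> v \<Longrightarrow> v \<le> 1 \<Longrightarrow> 0 \<le> K v" for v unfolding K_def by simp
  have q01: "0 \<le> q v" "q v \<le> 1" for v unfolding q_def by auto
  {
    assume up: "\<forall>v. 0 \<le> v \<and> v \<le> \<delta> \<longrightarrow> measure M {x\<in>space M. U x \<le> v} \<le> a * v" and a: "0 \<le> a"
    have "ennreal E \<le> (\<integral>\<^sup>+v. ennreal (a * (K v * v)) * indicator {0..1} v + ennreal (K v) * indicator {\<delta>..1} v \<partial>lborel)"
      unfolding eE
    proof (rule nn_integral_mono)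
      fix v :: real
      show "ennreal (K v) * indicator {0..1} v * ennreal (q v) \<le> ennreal (a * (K v * v)) * indicator {0..1} v + ennreal (K v) * indicator {\<delta>..1} v"
      proof (cases "0 \<le> v \<and> v \<le> 1")
        case True
        then have Kv: "0 \<le> K v" by (intro K0) auto
        show ?thesis
        proof (cases "v \<le> \<delta>")
          case vd: True
          have "K v * q v \<le> K v * (a * v)" using up[rule_format, of v] True vd Kv
            unfolding q_def by (intro mult_left_mono) auto
          then have "ennreal (K v * q v) \<le> ennreal (a * (K v * v))" by (intro ennreal_leI) (simp add: algebra_simps)
          then show ?thesis using True Kv q01[of v]
            by (simp add: ennreal_mult[symmetric] add_increasing2)
        next
          case vd: False
          have "K v * q v \<le> K v" using Kv q01[of v] by (simp add: mult_left_le)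
          then have "ennreal (K v * q v) \<le> ennreal (K v)" by (intro ennreal_leI)
          then show ?thesis using True vd Kv q01[of v]
            by (simp add: ennreal_mult[symmetric] add_increasing)
        qed
      qed simp
    qed
    also have "\<dots> = (\<integral>\<^sup>+v. ennreal (a * (K v * v)) * indicator {0..1} v \<partial>lborel) + (\<integral>\<^sup>+v. ennreal (K v) * indicator {\<delta>..1} v \<partial>lborel)"
      by (rule nn_integral_add) (auto simp: K_def)
    also have "(\<integral>\<^sup>+v. ennreal (a * (K v * v)) * indicator {0..1} v \<partial>lborel) =
        ennreal (a * (-((1-1)^Suc m * 1) - (1-1)^Suc (Suc m) / real (Suc (Suc m))) - a * (-((1-0)^Suc m * 0) - (1-0)^Suc (Suc m) / real (Suc (Suc m))))"
    proof (rule nn_integral_FTC_Icc)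
      show "(\<lambda>v. a * (K v * v)) \<in> borel_measurable borel" unfolding K_def by measurable
      fix v :: real assume v: "v \<in> {0..1}"
      show "((\<lambda>v. a * (-((1-v)^Suc m * v) - (1-v)^Suc (Suc m) / real (Suc (Suc m)))) has_real_derivative a * (K v * v)) (at v)"
        unfolding K_def using DERIV_cmult[OF Phi1_deriv[of m v], of a] by (simp add: algebra_simps)
      show "0 \<le> a * (K v * v)" using v a K0[of v] by auto
    qed simp
    also have "(\<integral>\<^sup>+v. ennreal (K v) * indicator {\<delta>..1} v \<partial>lborel) = ennreal (-((1-1)^Suc m) - (-((1-\<delta>)^Suc m)))"
    proof (rule nn_integral_FTC_Icc)
      show "K \<in> borel_measurable borel" unfolding K_def by measurable
      fix v :: real assume v: "v \<in> {\<delta>..1}"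
      show "((\<lambda>v. -((1-v)^Suc m)) has_real_derivative K v) (at v)"
        unfolding K_def by (rule K_deriv)
      show "0 \<le> K v" using v d K0[of v] by auto
    qed (use d in simp)
    finally have "ennreal E \<le> ennreal (a / real (Suc (Suc m)) + (1-\<delta>)^Suc m)"
      using a d by (simp add: ennreal_plus[symmetric] del: ennreal_plus)
    then show "(\<integral>x. (1 - U x)^Suc m \<partial>M) \<le> a / real (Suc (Suc m)) + (1-\<delta>)^Suc m"
      unfolding E_def[symmetric] using a d by (subst (asm) ennreal_le_iff) auto
  }
  {
    assume lo: "\<forall>v. 0 \<le> v \<and> v \<le> \<delta> \<longrightarrow> b * v \<le> measure M {x\<in>space M. U x \<le> v}" and b: "0 \<le> b"
    have "(\<integral>\<^sup>+v. ennreal (b * (K v * v)) * indicator {0..\<delta>} v \<partial>lborel) \<le> ennreal E"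
      unfolding eE
    proof (rule nn_integral_mono)
      fix v :: real
      show "ennreal (b * (K v * v)) * indicator {0..\<delta>} v \<le> ennreal (K v) * indicator {0..1} v * ennreal (q v)"
      proof (cases "0 \<le> v \<and> v \<le> \<delta>")
        case True
        then have Kv: "0 \<le> K v" using d by (intro K0) auto
        have "K v * (b * v) \<le> K v * q v" using lo[rule_format, of v] True Kv
          unfolding q_def by (intro mult_left_mono) auto
        then have "ennreal (b * (K v * v)) \<le> ennreal (K v * q v)" by (intro ennreal_leI) (simp add: algebra_simps)
        then show ?thesis using True Kv q01[of v] d
          by (simp add: ennreal_mult[symmetric])
      qed simp
    qed
    also have "(\<integral>\<^sup>+v. ennreal (b * (K v * v)) * indicator {0..\<delta>} v \<partial>lborel) =
        ennreal (b * (-((1-\<delta>)^Suc m * \<delta>) - (1-\<delta>)^Suc (Suc m) / real (Suc (Suc m))) - b * (-((1-0)^Suc m * 0) - (1-0)^Suc (Suc m) / real (Suc (Suc m))))"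
    proof (rule nn_integral_FTC_Icc)
      show "(\<lambda>v. b * (K v * v)) \<in> borel_measurable borel" unfolding K_def by measurable
      fix v :: real assume v: "v \<in> {0..\<delta>}"
      show "((\<lambda>v. b * (-((1-v)^Suc m * v) - (1-v)^Suc (Suc m) / real (Suc (Suc m)))) has_real_derivative b * (K v * v)) (at v)"
        unfolding K_def using DERIV_cmult[OF Phi1_deriv[of m v], of b] by (simp add: algebra_simps)
      show "0 \<le> b * (K v * v)" using v b d K0[of v] by auto
    qed (use d in simp)
    finally have *: "ennreal (b * (1 / real (Suc (Suc m)) - (1-\<delta>)^Suc m * \<delta> - (1-\<delta>)^Suc (Suc m) / real (Suc (Suc m)))) \<le> ennreal E"
      by (simp add: algebra_simps)
    show "b * (1 / real (Suc (Suc m)) - (1-\<delta>)^Suc m * \<delta> - (1-\<delta>)^Suc (Suc m) / real (Suc (Suc m)))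
        \<le> (\<integral>x. (1 - U x)^Suc m \<partial>M)"
      using * E0 unfolding E_def[symmetric] by (simp add: ennreal_le_iff)
  }
qed


lemma lemA:
  fixes M :: "'a measure" and U :: "'a \<Rightarrow> real"
  assumes P: "prob_space M" and Um[measurable]: "U \<in> borel_measurable M"
  and U01: "\<And>x. x \<in> space M \<Longrightarrow> 0 \<le> U x \<and> U x \<le> 1"
  and c: "0 \<le> c"
  and hyp: "\<And>eps. eps > 0 \<Longrightarrow> \<exists>\<delta>>0. \<delta> \<le> 1 \<and> (\<forall>v. 0 < v \<and> v \<le> \<delta> \<longrightarrow> abs (measure M {x\<in>space M. U x \<le> v} - c * v) \<le> eps * v)"
  shows "(\<lambda>n. real n * (\<integral>x. (1 - U x)^n \<partial>M)) \<longlonglongrightarrow> c"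
proof -
  interpret prob_space M by (rule P)
  define q where "q v = measure M {x\<in>space M. U x \<le> v}" for v
  define S where "S m = real (Suc m) * (\<integral>x. (1 - U x)^Suc m \<partial>M)" for m
  have qmono: "v \<le> w \<Longrightarrow> q v \<le> q w" for v w unfolding q_def
    by (intro finite_measure_mono) auto
  have "S \<longlonglongrightarrow> c"
    unfolding tendsto_iff
  proof (intro allI impI)
    fix e :: real assume e: "0 < e"
    define eps where "eps = e / 4"
    have eps: "0 < eps" using e by (simp add: eps_def)
    obtain \<delta> where d: "0 < \<delta>" "\<delta> \<le> 1" and dq: "\<And>v. 0 < v \<Longrightarrow> v \<le> \<delta> \<Longrightarrow> \<bar>q v - c * v\<bar> \<le> eps * v"
      using hyp[OF eps] unfolding q_def by blast
    have q0: "q 0 \<le> 0"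
    proof (rule ccontr)
      assume "\<not> q 0 \<le> 0"
      then have q0p: "0 < q 0" by simp
      define w where "w = min \<delta> (q 0 / (2 * (c + eps)))"
      have w: "0 < w" "w \<le> \<delta>" using d q0p c eps by (auto simp: w_def)
      have "q 0 \<le> q w" using w by (intro qmono) simp
      also have "\<dots> \<le> (c + eps) * w" using dq[OF w] by (simp add: algebra_simps abs_le_iff)
      also have "\<dots> \<le> (c + eps) * (q 0 / (2 * (c + eps)))" using c eps by (intro mult_left_mono) (auto simp: w_def)
      also have "\<dots> = q 0 / 2" using c eps by (simp add: field_simps)
      finally show False using q0p by simp
    qed
    have up: "\<forall>v. 0 \<le> v \<and> v \<le> \<delta> \<longrightarrow> measure M {x\<in>space M. U x \<le> v} \<le> (c+eps) * v"
    proof (intro allI impI)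
      fix v assume v: "0 \<le> v \<and> v \<le> \<delta>"
      show "measure M {x\<in>space M. U x \<le> v} \<le> (c+eps) * v"
      proof (cases "v = 0")
        case True then show ?thesis using q0 unfolding q_def by simp
      next
        case False then show ?thesis using dq[of v] v unfolding q_def by (simp add: algebra_simps abs_le_iff)
      qed
    qed
    define b where "b = max 0 (c - eps)"
    have lo: "\<forall>v. 0 \<le> v \<and> v \<le> \<delta> \<longrightarrow> b * v \<le> measure M {x\<in>space M. U x \<le> v}"
    proof (intro allI impI)
      fix v assume v: "0 \<le> v \<and> v \<le> \<delta>"
      show "b * v \<le> measure M {x\<in>space M. U x \<le> v}"
      proof (cases "v = 0")
        case True then show ?thesis by simp
      next
        case False
        then have "(c - eps) * v \<le> q v" using dq[of v] v by (simp add: algebra_simps abs_le_iff)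
        moreover have "0 \<le> q v" unfolding q_def by simp
        ultimately show ?thesis unfolding q_def b_def using v by (auto simp: max_def)
      qed
    qed
    have b: "0 \<le> b" "c - eps \<le> b" by (auto simp: b_def)
    have ceps: "0 \<le> c + eps" using c eps by linarith
    define Up where "Up m = (c+eps) * (real (Suc m) / real (Suc (Suc m))) + real (Suc m) * (1-\<delta>)^Suc m" for m
    define Lo where "Lo m = b * (real (Suc m) * (1 / real (Suc (Suc m))) - real (Suc m) * ((1-\<delta>)^Suc m * \<delta>)
          - real (Suc m) * ((1-\<delta>)^Suc (Suc m) / real (Suc (Suc m))))" for m
    have L1: "(\<lambda>m. real (Suc m) / real (Suc (Suc m))) \<longlonglongrightarrow> 1"
      using LIMSEQ_Suc[OF LIMSEQ_n_over_Suc_n] by simp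
    have L2: "(\<lambda>m. real (Suc m) * (1-\<delta>)^Suc m) \<longlonglongrightarrow> 0"
      using LIMSEQ_Suc[OF powser_times_n_limit_0[of "1-\<delta>"]] d by simp
    have L3: "(\<lambda>m. (1-\<delta>)^Suc (Suc m)) \<longlonglongrightarrow> 0"
      using LIMSEQ_Suc[OF LIMSEQ_Suc[OF LIMSEQ_power_zero[of "1-\<delta>"]]] d by simp
    have Upl: "Up \<longlonglongrightarrow> (c+eps) * 1 + 0" unfolding Up_def by (intro tendsto_intros L1 L2)
    have Lol: "Lo \<longlonglongrightarrow> b * (1 - 0 * \<delta> - 1 * 0)"
    proof -
      have "Lo = (\<lambda>m. b * (real (Suc m) / real (Suc (Suc m)) - (real (Suc m) * (1-\<delta>)^Suc m) * \<delta>
          - (real (Suc m) / real (Suc (Suc m))) * (1-\<delta>)^Suc (Suc m)))"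
        unfolding Lo_def by (intro ext) (simp add: field_simps)
      then show ?thesis by (simp only:) (intro tendsto_intros L1 L2 L3)
    qed
    have evU: "\<forall>\<^sub>F m in sequentially. Up m < c + 2*eps"
      by (rule order_tendstoD(2)[OF Upl]) (use eps in simp)
    have evL: "\<forall>\<^sub>F m in sequentially. c - 2*eps < Lo m"
      by (rule order_tendstoD(1)[OF Lol]) (use eps b in simp)
    show "\<forall>\<^sub>F m in sequentially. dist (S m) c < e"
      using evU evL
    proof eventually_elim
      case (elim m)
      have "S m \<le> Up m"
      proof -
        have "(\<integral>x. (1 - U x)^Suc m \<partial>M) \<le> (c+eps) / real (Suc (Suc m)) + (1-\<delta>)^Suc m"
          using layer_bounds(1)[OF P Um U01 d up ceps] .
        then have "S m \<le> real (Suc m) * ((c+eps) / real (Suc (Suc m)) + (1-\<delta>)^Suc m)"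
          unfolding S_def by (intro mult_left_mono) auto
        then show ?thesis unfolding Up_def by (simp add: algebra_simps)
      qed
      moreover have "Lo m \<le> S m"
      proof -
        have "b * (1 / real (Suc (Suc m)) - (1-\<delta>)^Suc m * \<delta> - (1-\<delta>)^Suc (Suc m) / real (Suc (Suc m)))
            \<le> (\<integral>x. (1 - U x)^Suc m \<partial>M)"
          by (rule layer_bounds(2)[OF P Um U01 d lo b(1)])
        then have "real (Suc m) * (b * (1 / real (Suc (Suc m)) - (1-\<delta>)^Suc m * \<delta> - (1-\<delta>)^Suc (Suc m) / real (Suc (Suc m))))
            \<le> S m"
          unfolding S_def by (intro mult_left_mono) auto
        then show ?thesis unfolding Lo_def by (simp only: right_diff_distrib mult.assoc mult.left_commute)
      qed
      ultimately show ?case using elim eps unfolding eps_def dist_real_def by auto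
    qed
  qed
  then have "(\<lambda>m. real (Suc m) * (\<integral>x. (1 - U x)^Suc m \<partial>M)) \<longlonglongrightarrow> c" unfolding S_def .
  then show ?thesis by (rule LIMSEQ_imp_Suc)
qed

lemma marg_lemma:
  fixes F :: "(real \<times> real) measure" and \<pi> :: "real \<times> real \<Rightarrow> real"
  assumes P: "prob_space F"
  and pim[measurable]: "\<pi> \<in> borel_measurable F"
  and MF: "\<And>t. measure F {x\<in>space F. \<pi> x \<le> t} = Fm t"
  and Gc: "continuous_on UNIV Gm" and Gmono: "\<And>s t. s \<le> t \<Longrightarrow> Gm s \<le> Gm t"
  and G01: "\<And>t. 0 \<le> Gm t \<and> Gm t \<le> 1" and Gtop: "(Gm \<longlongrightarrow> 1) at_top"
  and ratio: "((\<lambda>t. (1 - Fm t) / (1 - Gm t)) \<longlongrightarrow> 1) at_top"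
  shows "(\<lambda>n. real n * (\<integral>x. Gm (\<pi> x) ^ n \<partial>F)) \<longlonglongrightarrow> 1"
proof -
  interpret prob_space F by (rule P)
  have Gmeas[measurable]: "Gm \<in> borel_measurable borel" by (rule borel_measurable_continuous_onI[OF Gc])
  have FmT: "measure F {x\<in>space F. t < \<pi> x} = 1 - Fm t" for t
  proof -
    have "{x\<in>space F. t < \<pi> x} = space F - {x\<in>space F. \<pi> x \<le> t}" by auto
    then show ?thesis using prob_compl[of "{x\<in>space F. \<pi> x \<le> t}"] MF[of t] by simp
  qed
  define U where "U x = 1 - Gm (\<pi> x)" for x
  have lim: "(\<lambda>n. real n * (\<integral>x. (1 - U x)^n \<partial>F)) \<longlonglongrightarrow> 1"
  proof (rule lemA[OF P])
    show "U \<in> borel_measurable F" unfolding U_def by measurable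
    show "0 \<le> U x \<and> U x \<le> 1" for x unfolding U_def using G01[of "\<pi> x"] by auto
    fix eps :: real assume eps: "0 < eps"
    define \<eta> where "\<eta> = min (1/2) (eps / 3)"
    have \<eta>: "0 < \<eta>" "\<eta> \<le> 1/2" "3 * \<eta> \<le> eps" using eps by (auto simp: \<eta>_def)
    have "\<forall>\<^sub>F t in at_top. dist ((1 - Fm t) / (1 - Gm t)) 1 < \<eta>"
      using ratio \<eta> by (auto simp: tendsto_iff)
    then obtain T where T: "\<And>t. T \<le> t \<Longrightarrow> \<bar>(1 - Fm t) / (1 - Gm t) - 1\<bar> < \<eta>"
      by (auto simp: eventually_at_top_linorder dist_real_def)
    have TT: "0 < 1 - Gm t \<and> (1-\<eta>) * (1 - Gm t) \<le> 1 - Fm t \<and> 1 - Fm t \<le> (1+\<eta>) * (1 - Gm t)" if t: "T \<le> t" for t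
    proof -
      have r: "\<bar>(1 - Fm t) / (1 - Gm t) - 1\<bar> < \<eta>" by (rule T[OF t])
      have "1 - Gm t \<noteq> 0" proof
        assume "1 - Gm t = 0" then show False using r \<eta> by simp
      qed
      then have g: "0 < 1 - Gm t" using G01[of t] by simp
      then show ?thesis using r by (auto simp: field_simps abs_less_iff)
    qed
    define \<delta> where "\<delta> = (1 - Gm T) / (1 + \<eta>)"
    have d0: "0 < \<delta>" using TT[of T] \<eta> by (simp add: \<delta>_def)
    have d1: "\<delta> \<le> 1" using G01[of T] \<eta> by (simp add: \<delta>_def field_simps)
    show "\<exists>\<delta>>0. \<delta> \<le> 1 \<and> (\<forall>v. 0 < v \<and> v \<le> \<delta> \<longrightarrow> abs (measure F {x\<in>space F. U x \<le> v} - 1 * v) \<le> eps * v)"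
    proof (intro exI conjI allI impI)
      fix v assume v: "0 < v \<and> v \<le> \<delta>"
      have vT: "(1+\<eta>) * v \<le> 1 - Gm T" using v \<eta> by (simp add: \<delta>_def field_simps)
      have "\<forall>\<^sub>F t in at_top. 1 - v < Gm t" by (rule order_tendstoD(1)[OF Gtop]) (use v in simp)
      then obtain T0 where T0: "\<And>t. T0 \<le> t \<Longrightarrow> 1 - v < Gm t" by (auto simp: eventually_at_top_linorder)
      define T' where "T' = max T T0"
      have T'1: "T \<le> T'" and T'2: "1 - v < Gm T'" using T0[of T'] by (auto simp: T'_def)
      have cont: "continuous_on {T..T'} Gm" using Gc by (rule continuous_on_subset) auto
      obtain t where t: "T \<le> t" "t \<le> T'" "Gm t = 1 - (1+\<eta>) * v"
        using IVT'[of Gm T "1 - (1+\<eta>) * v" T', OF _ _ T'1 cont] vT T'2 \<eta> v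
        by (smt (verit, best) mult_le_cancel_right2)
      obtain t' where t': "T \<le> t'" "t' \<le> T'" "Gm t' = 1 - v"
        using IVT'[of Gm T "1 - v" T', OF _ _ T'1 cont] vT T'2 \<eta> v
        by (smt (verit, best) mult_le_cancel_right2)
      have meas: "{x\<in>space F. U x \<le> v} \<in> events" unfolding U_def by measurable
      have up: "measure F {x\<in>space F. U x \<le> v} \<le> (1+\<eta>) * (1+\<eta>) * v"
      proof -
        have "{x\<in>space F. U x \<le> v} \<subseteq> {x\<in>space F. t < \<pi> x}"
        proof safe
          fix x assume x: "x \<in> space F" "U x \<le> v"
          show "t < \<pi> x"
          proof (rule ccontr)
            assume "\<not> t < \<pi> x"
            then have "Gm (\<pi> x) \<le> Gm t" by (intro Gmono) simp
            then have "(1+\<eta>) * v \<le> U x" using t(3) unfolding U_def by simp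
            then show False using x(2) v \<eta> by (smt (verit) mult_le_cancel_right2)
          qed
        qed
        then have "measure F {x\<in>space F. U x \<le> v} \<le> measure F {x\<in>space F. t < \<pi> x}"
          by (intro finite_measure_mono) auto
        also have "\<dots> = 1 - Fm t" by (rule FmT)
        also have "\<dots> \<le> (1+\<eta>) * (1 - Gm t)" using TT[OF t(1)] by simp
        also have "\<dots> = (1+\<eta>) * (1+\<eta>) * v" using t(3) by simp
        finally show ?thesis .
      qed
      have lo: "(1-\<eta>) * v \<le> measure F {x\<in>space F. U x \<le> v}"
      proof -
        have "(1-\<eta>) * v = (1-\<eta>) * (1 - Gm t')" using t'(3) by simp
        also have "\<dots> \<le> 1 - Fm t'" using TT[OF t'(1)] by simp
        also have "\<dots> = measure F {x\<in>space F. t' < \<pi> x}" by (rule FmT[symmetric])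
        also have "\<dots> \<le> measure F {x\<in>space F. U x \<le> v}"
        proof (intro finite_measure_mono meas)
          show "{x\<in>space F. t' < \<pi> x} \<subseteq> {x\<in>space F. U x \<le> v}"
          proof safe
            fix x assume x: "x \<in> space F" "t' < \<pi> x"
            then have "Gm t' \<le> Gm (\<pi> x)" by (intro Gmono) simp
            then show "U x \<le> v" using t'(3) unfolding U_def by simp
          qed
        qed
        finally show ?thesis .
      qed
      have "(1+\<eta>) * (1+\<eta>) * v = v + (2*\<eta> + \<eta>*\<eta>) * v" by (simp add: algebra_simps)
      moreover have "(2*\<eta> + \<eta>*\<eta>) * v \<le> eps * v"
      proof (rule mult_right_mono)
        have "\<eta>*\<eta> \<le> \<eta> * 1" using \<eta> by (intro mult_left_mono) auto
        then show "2*\<eta> + \<eta>*\<eta> \<le> eps" using \<eta> by linarith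
      qed (use v in simp)
      moreover have "\<eta> * v \<le> eps * v" using \<eta> v by (intro mult_right_mono) auto
      ultimately show "abs (measure F {x\<in>space F. U x \<le> v} - 1 * v) \<le> eps * v"
        using up lo by (simp add: abs_le_iff algebra_simps)
    qed (use d0 d1 in auto)
  qed simp
  then show ?thesis unfolding U_def by simp
qed

lemma iii_v:
  assumes F: "bm F" and G: "bm G" and GC: "continuous_on UNIV (bdf G)"
  shows "(\<lambda>n::nat. real n * (\<integral>x. (bdf G x) ^ n \<partial>F)) \<longlonglongrightarrow> 0
      \<longleftrightarrow> (\<lambda>n::nat. real n * measure F {x. bdf G x > 1 - 1 / real n}) \<longlonglongrightarrow> 0"
proof -
  interpret F: bm F by (rule F)
  interpret G: bm G by (rule G)
  have bm[measurable]: "bdf G \<in> borel_measurable F"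
    unfolding measurable_cong_sets[OF F.S refl] by (rule borel_measurable_continuous_onI[OF GC])
  have b01: "0 \<le> bdf G x" "bdf G x \<le> 1" for x using G.bdf_nn G.bdf_le_1 by auto
  have Vm: "{x. bdf G x > c} \<in> F.events" for c
  proof -
    have "{x. bdf G x > c} = {x\<in>space F. bdf G x > c}" by simp
    also have "\<dots> \<in> F.events" by measurable
    finally show ?thesis .
  qed
  have intG: "integrable F (\<lambda>x. bdf G x ^ n)" for n
    by (rule F.integrable_const_bound[where B=1]) (use b01 in \<open>auto intro!: power_le_one\<close>)
  show ?thesis
  proof
    assume a: "(\<lambda>n::nat. real n * (\<integral>x. (bdf G x) ^ n \<partial>F)) \<longlonglongrightarrow> 0"
    have l: "(\<lambda>n::nat. exp 2 * (real n * (\<integral>x. (bdf G x) ^ n \<partial>F))) \<longlonglongrightarrow> 0"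
      using tendsto_mult_left[OF a, of "exp 2"] by simp
    show "(\<lambda>n::nat. real n * measure F {x. bdf G x > 1 - 1 / real n}) \<longlonglongrightarrow> 0"
    proof (rule tendsto_sandwich[OF _ _ tendsto_const l])
      show "\<forall>\<^sub>F n in sequentially. 0 \<le> real n * measure F {x. bdf G x > 1 - 1 / real n}" by simp
      show "\<forall>\<^sub>F n in sequentially. real n * measure F {x. bdf G x > 1 - 1 / real n}
          \<le> exp 2 * (real n * (\<integral>x. (bdf G x) ^ n \<partial>F))"
        using eventually_ge_at_top[of "2::nat"]
      proof eventually_elim
        case (elim n)
        define V where "V = {x. bdf G x > 1 - 1 / real n}"
        have u: "0 \<le> 1 / real n" "1 / real n \<le> 1/2" using elim by (auto simp: field_simps)
        have e: "exp (-2) \<le> (1 - 1 / real n)^n"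
        proof -
          have "exp (-2 * real n * (1 / real n)) = exp (-2)" using elim by simp
          then show ?thesis using pow_lb[OF u, of n] by simp
        qed
        have "(1 - 1 / real n)^n * measure F V = (\<integral>x. (1 - 1 / real n)^n * indicator V x \<partial>F)"
          by (simp only: integral_mult_right_zero integral_indicator) simp
        also have "\<dots> \<le> (\<integral>x. (bdf G x) ^ n \<partial>F)"
        proof (rule integral_mono[OF _ intG])
          show "integrable F (\<lambda>x. (1 - 1 / real n)^n * indicator V x)"
          proof (rule integrable_mult_right, rule integrable_real_indicator)
            show "V \<in> sets F" unfolding V_def by (rule Vm)
            show "emeasure F V < \<infinity>" by (simp add: F.emeasure_eq_measure)
          qed
          fix x
          show "(1 - 1 / real n)^n * indicator V x \<le> bdf G x ^ n"
          proof (cases "x \<in> V")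
            case True
            then have "1 - 1 / real n \<le> bdf G x" unfolding V_def by simp
            then show ?thesis using True u by (simp add: power_mono)
          qed (use b01 in simp)
        qed
        finally have "(1 - 1 / real n)^n * measure F V \<le> (\<integral>x. (bdf G x) ^ n \<partial>F)" .
        moreover have "exp (-2) * measure F V \<le> (1 - 1 / real n)^n * measure F V"
          using e by (intro mult_right_mono) auto
        ultimately have "exp (-2) * measure F V \<le> (\<integral>x. (bdf G x) ^ n \<partial>F)" by linarith
        then have "measure F V \<le> exp 2 * (\<integral>x. (bdf G x) ^ n \<partial>F)"
          by (simp add: exp_minus field_simps)
        then have "real n * measure F V \<le> real n * (exp 2 * (\<integral>x. (bdf G x) ^ n \<partial>F))"
          by (intro mult_left_mono) auto
        then show ?case unfolding V_def by (simp add: algebra_simps)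
      qed
    qed
  next
    assume a: "(\<lambda>n::nat. real n * measure F {x. bdf G x > 1 - 1 / real n}) \<longlonglongrightarrow> 0"
    define p where "p n = measure F {x. bdf G x > 1 - 1 / real n}" for n :: nat
    define U where "U x = 1 - bdf G x" for x
    have "(\<lambda>n. real n * (\<integral>x. (1 - U x)^n \<partial>F)) \<longlonglongrightarrow> 0"
    proof (rule lemA[OF F.P])
      show "U \<in> borel_measurable F" unfolding U_def by measurable
      show "0 \<le> U x \<and> U x \<le> 1" for x unfolding U_def using b01[of x] by auto
      fix eps :: real assume eps: "0 < eps"
      have "\<forall>\<^sub>F n in sequentially. real n * p n < eps / 4"
        by (rule order_tendstoD(2)[OF a[folded p_def]]) (use eps in simp)
      then obtain N where N: "\<And>n. N \<le> n \<Longrightarrow> real n * p n < eps / 4"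
        by (auto simp: eventually_sequentially)
      define \<delta> where "\<delta> = 1 / (2 * (real N + 1))"
      show "\<exists>\<delta>>0. \<delta> \<le> 1 \<and> (\<forall>v. 0 < v \<and> v \<le> \<delta> \<longrightarrow> abs (measure F {x\<in>space F. U x \<le> v} - 0 * v) \<le> eps * v)"
      proof (intro exI conjI allI impI)
        show "0 < \<delta>" "\<delta> \<le> 1" by (auto simp: \<delta>_def field_simps)
        fix v :: real assume v: "0 < v \<and> v \<le> \<delta>"
        define n where "n = nat \<lfloor>1 / (2 * v)\<rfloor>"
        have big: "real N + 1 \<le> 1 / (2 * v)" using v by (simp add: \<delta>_def field_simps)
        have fl: "real_of_int \<lfloor>1 / (2 * v)\<rfloor> \<le> 1 / (2 * v)" "1 / (2 * v) < real_of_int \<lfloor>1 / (2 * v)\<rfloor> + 1"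
          by linarith+
        have fl2: "real N + 1 \<le> real_of_int \<lfloor>1 / (2 * v)\<rfloor>" using big
          by (metis floor_mono floor_of_nat of_int_le_iff of_nat_Suc add.commute floor_of_int of_int_of_nat_eq)
        have rn: "real n = real_of_int \<lfloor>1 / (2 * v)\<rfloor>" unfolding n_def using fl2 by simp
        have nN: "N \<le> n" using fl2 rn by linarith
        have n1: "1 \<le> real n" using fl2 rn by linarith
        have r1: "real n \<le> 1 / (2 * v)" using fl(1) rn by linarith
        have r2: "1 / (2 * v) < real n + 1" using fl(2) rn by linarith
        have a1: "2 * v * real n \<le> 1"
        proof -
          have "2 * v * real n \<le> 2 * v * (1 / (2 * v))" using r1 v by (intro mult_left_mono) auto
          then show ?thesis using v by simp
        qed
        have a2: "1 < 2 * v * (real n + 1)"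
        proof -
          have "2 * v * (1 / (2 * v)) < 2 * v * (real n + 1)" using r2 v by (intro mult_strict_left_mono) auto
          then show ?thesis using v by simp
        qed
        have sub: "{x\<in>space F. U x \<le> v} \<subseteq> {x. bdf G x > 1 - 1 / real n}"
        proof safe
          fix x assume "U x \<le> v"
          then have "1 - v \<le> bdf G x" unfolding U_def by simp
          moreover have "v < 1 / real n" using a1 v n1 by (simp add: field_simps)
          ultimately show "bdf G x > 1 - 1 / real n" by simp
        qed
        have "measure F {x\<in>space F. U x \<le> v} \<le> p n"
          unfolding p_def using F.finite_measure_mono[OF sub Vm] .
        also have "\<dots> \<le> eps / (4 * real n)" using N[OF nN] n1 by (simp add: field_simps)
        also have "\<dots> \<le> eps * v"
        proof -
          have vv: "v * 1 \<le> v * real n" using n1 v by (intro mult_left_mono) auto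
          have "2 * v * (real n + 1) = 2 * (v * real n) + 2 * v" by (simp add: algebra_simps)
          then have h4: "1 \<le> 4 * v * real n" using a2 vv by simp
          have "eps * 1 \<le> eps * (4 * v * real n)" using h4 eps by (intro mult_left_mono) auto
          then have "eps \<le> eps * v * (4 * real n)" by (simp add: algebra_simps)
          then show ?thesis using n1 by (subst pos_divide_le_eq) auto
        qed
        finally show "abs (measure F {x\<in>space F. U x \<le> v} - 0 * v) \<le> eps * v" by simp
      qed
    qed simp
    then show "(\<lambda>n::nat. real n * (\<integral>x. (bdf G x) ^ n \<partial>F)) \<longlonglongrightarrow> 0" unfolding U_def by simp
  qed
qed

context bm begin

definition mx :: "nat \<Rightarrow> (nat \<Rightarrow> real \<times> real) \<Rightarrow> real \<times> real" where
  "mx n \<omega> = (MAX i\<in>{..<n}. fst (\<omega> i), MAX i\<in>{..<n}. snd (\<omega> i))"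

lemma mx_meas: "mx n \<in> measurable (PiM {..<n} (\<lambda>_. M)) borel"
proof -
  have "mx n \<in> measurable (PiM {..<n} (\<lambda>_. M)) (borel \<Otimes>\<^sub>M borel)"
    unfolding mx_def by measurable
  then show ?thesis by (simp add: borel_prod)
qed

lemma maxpow_eq: "maxpow M n = distr (PiM {..<n} (\<lambda>_. M)) borel (mx n)"
  unfolding maxpow_def mx_def by simp

lemma maxpow_prob: "prob_space (maxpow M n)"
  unfolding maxpow_eq
  by (intro prob_space.prob_space_distr prob_space_PiM mx_meas) (auto intro: P)

lemma maxpow_sets: "sets (maxpow M n) = sets borel"
  unfolding maxpow_eq by simp

lemma maxpow_times:
  assumes n: "n \<ge> 1" and Ab: "A \<in> sets borel" and Bb: "B \<in> sets borel"
  and hA: "\<And>S. finite S \<Longrightarrow> S \<noteq> {} \<Longrightarrow> Max S \<in> A \<longleftrightarrow> S \<subseteq> A"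
  and hB: "\<And>S. finite S \<Longrightarrow> S \<noteq> {} \<Longrightarrow> Max S \<in> B \<longleftrightarrow> S \<subseteq> B"
  shows "measure (maxpow M n) (A \<times> B) = prob (A \<times> B) ^ n"
proof -
  interpret ps: product_sigma_finite "\<lambda>_. M"
    by standard
  have ne: "{..<n} \<noteq> {}" using n by (metis lessThan_iff less_le_trans less_one empty_iff)
  have pre: "mx n -` (A \<times> B) \<inter> space (PiM {..<n} (\<lambda>_. M)) = PiE {..<n} (\<lambda>_. A \<times> B)"
  proof (intro set_eqI iffI)
    fix \<omega> assume w: "\<omega> \<in> mx n -` (A \<times> B) \<inter> space (PiM {..<n} (\<lambda>_. M))"
    then have sp: "\<omega> \<in> PiE {..<n} (\<lambda>_. UNIV)" by (simp add: space_PiM)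
    have "(MAX i\<in>{..<n}. fst (\<omega> i)) \<in> A" "(MAX i\<in>{..<n}. snd (\<omega> i)) \<in> B"
      using w by (auto simp: mx_def)
    then have "(\<lambda>i. fst (\<omega> i)) ` {..<n} \<subseteq> A" "(\<lambda>i. snd (\<omega> i)) ` {..<n} \<subseteq> B"
      using hA[of "(\<lambda>i. fst (\<omega> i)) ` {..<n}"] hB[of "(\<lambda>i. snd (\<omega> i)) ` {..<n}"] ne by auto
    then show "\<omega> \<in> PiE {..<n} (\<lambda>_. A \<times> B)" using sp by (auto simp: PiE_iff mem_Times_iff)
  next
    fix \<omega> assume w: "\<omega> \<in> PiE {..<n} (\<lambda>_. A \<times> B)"
    then have "(\<lambda>i. fst (\<omega> i)) ` {..<n} \<subseteq> A" "(\<lambda>i. snd (\<omega> i)) ` {..<n} \<subseteq> B"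
      by (auto simp: PiE_iff mem_Times_iff)
    then have "(MAX i\<in>{..<n}. fst (\<omega> i)) \<in> A" "(MAX i\<in>{..<n}. snd (\<omega> i)) \<in> B"
      using hA[of "(\<lambda>i. fst (\<omega> i)) ` {..<n}"] hB[of "(\<lambda>i. snd (\<omega> i)) ` {..<n}"] ne by auto
    moreover have "\<omega> \<in> PiE {..<n} (\<lambda>_. UNIV)" using w by (auto simp: PiE_iff)
    ultimately show "\<omega> \<in> mx n -` (A \<times> B) \<inter> space (PiM {..<n} (\<lambda>_. M))"
      by (simp add: space_PiM mx_def)
  qed
  have "measure (maxpow M n) (A \<times> B) = measure (PiM {..<n} (\<lambda>_. M)) (PiE {..<n} (\<lambda>_. A \<times> B))"
    unfolding maxpow_eq using Ab Bb by (subst measure_distr[OF mx_meas]) (auto simp: pre)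
  also have "\<dots> = prob (A \<times> B) ^ n"
  proof (rule measure_eq_emeasure_eq_ennreal)
    have "emeasure (PiM {..<n} (\<lambda>_. M)) (PiE {..<n} (\<lambda>_. A \<times> B)) = (\<Prod>i\<in>{..<n}. emeasure M (A \<times> B))"
      using Ab Bb by (intro ps.emeasure_PiM) auto
    also have "\<dots> = ennreal (prob (A \<times> B)) ^ n" by (simp add: emeasure_eq_measure)
    also have "\<dots> = ennreal (prob (A \<times> B) ^ n)" by (simp add: ennreal_power)
    finally show "emeasure (PiM {..<n} (\<lambda>_. M)) (PiE {..<n} (\<lambda>_. A \<times> B)) = ennreal (prob (A \<times> B) ^ n)" .
  qed simp
  finally show ?thesis .
qed

lemma maxpow_strict:
  assumes n: "n \<ge> 1" and C: "continuous_on UNIV (bdf M)"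
  shows "measure (maxpow M n) ({..<a} \<times> {..<b}) = bdf M (a,b) ^ n"
    "measure (maxpow M n) ({..<a} \<times> UNIV) = marg1 M a ^ n"
    "measure (maxpow M n) (UNIV \<times> {..<b}) = marg2 M b ^ n"
  using maxpow_times[OF n, of "{..<a}" "{..<b}"] maxpow_times[OF n, of "{..<a}" UNIV]
    maxpow_times[OF n, of UNIV "{..<b}"] strict_bdf[OF C] strict_marg1[OF C] strict_marg2[OF C]
  by auto

end


lemma fub:
  fixes M N :: "(real \<times> real) measure"
  assumes M: "bm M" and N: "bm N"
  and S: "S \<in> sets (borel :: ((real \<times> real) \<times> (real \<times> real)) measure)"
  shows "(\<integral>m. measure N {x. (m,x) \<in> S} \<partial>M) = (\<integral>x. measure M {m. (m,x) \<in> S} \<partial>N)"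
proof -
  interpret M: bm M by (rule M)
  interpret N: bm N by (rule N)
  interpret pair_sigma_finite M N
    unfolding pair_sigma_finite_def using M.P N.P by (auto intro: prob_space_imp_sigma_finite)
  have "sets (M \<Otimes>\<^sub>M N) = sets (borel \<Otimes>\<^sub>M borel)" by (rule sets_pair_measure_cong[OF M.S N.S])
  also have "\<dots> = sets (borel :: ((real \<times> real) \<times> (real \<times> real)) measure)" by (subst borel_prod) (rule refl)
  finally have SS: "S \<in> sets (M \<Otimes>\<^sub>M N)" using S by simp
  have e1: "Pair m -` S = {x. (m,x) \<in> S}" for m by auto
  have e2: "(\<lambda>x. (x, y)) -` S = {m. (m,y) \<in> S}" for y by auto
  have m1: "(\<lambda>m. measure N {x. (m,x) \<in> S}) \<in> borel_measurable M"
    using measurable_emeasure_Pair1[OF SS] unfolding e1 measure_def by measurable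
  have m2: "(\<lambda>y. measure M {m. (m,y) \<in> S}) \<in> borel_measurable N"
    using measurable_emeasure_Pair2[OF SS] unfolding e2 measure_def by measurable
  have i1: "integrable M (\<lambda>m. measure N {x. (m,x) \<in> S})"
    by (rule M.integrable_const_bound[where B=1]) (auto intro: m1)
  have i2: "integrable N (\<lambda>y. measure M {m. (m,y) \<in> S})"
    by (rule N.integrable_const_bound[where B=1]) (auto intro: m2)
  have "ennreal (\<integral>m. measure N {x. (m,x) \<in> S} \<partial>M) = (\<integral>\<^sup>+m. ennreal (measure N {x. (m,x) \<in> S}) \<partial>M)"
    by (rule nn_integral_eq_integral[OF i1, symmetric]) auto
  also have "\<dots> = (\<integral>\<^sup>+m. emeasure N (Pair m -` S) \<partial>M)"
    unfolding e1 by (simp add: N.emeasure_eq_measure)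
  also have "\<dots> = emeasure (M \<Otimes>\<^sub>M N) S"
    by (rule sigma_finite_measure.emeasure_pair_measure_alt[OF prob_space_imp_sigma_finite[OF N.P] SS, symmetric])
  also have "\<dots> = (\<integral>\<^sup>+y. emeasure M ((\<lambda>x. (x, y)) -` S) \<partial>N)"
    by (rule emeasure_pair_measure_alt2[OF SS])
  also have "\<dots> = (\<integral>\<^sup>+y. ennreal (measure M {m. (m,y) \<in> S}) \<partial>N)"
    unfolding e2 by (simp add: M.emeasure_eq_measure)
  also have "\<dots> = ennreal (\<integral>y. measure M {m. (m,y) \<in> S} \<partial>N)"
    by (rule nn_integral_eq_integral[OF i2]) auto
  finally show ?thesis
    by (subst (asm) ennreal_inj) (auto intro!: integral_nonneg_AE)
qed

lemma ident:
  assumes F: "bm F" and G: "bm G" and GC: "continuous_on UNIV (bdf G)" and n: "n \<ge> 1"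
  shows "(\<integral>m. 1 - bdf F m \<partial>maxpow G n) =
     (\<integral>x. marg1 G (fst x) ^ n \<partial>F) + (\<integral>x. marg2 G (snd x) ^ n \<partial>F) - (\<integral>x. bdf G x ^ n \<partial>F)"
proof -
  interpret F: bm F by (rule F)
  interpret G: bm G by (rule G)
  interpret mu: bm "maxpow G n" by (rule bm.intro[OF G.maxpow_prob G.maxpow_sets])
  define S :: "((real \<times> real) \<times> (real \<times> real)) set" where
    "S = {p. fst (fst p) < fst (snd p)} \<union> {p. snd (fst p) < snd (snd p)}"
  have Sb: "S \<in> sets borel" unfolding S_def
    by (intro sets.Un borel_open open_Collect_less continuous_intros)
  have "(\<integral>m. 1 - bdf F m \<partial>maxpow G n) = (\<integral>m. measure F {x. (m,x) \<in> S} \<partial>maxpow G n)"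
  proof (rule Bochner_Integration.integral_cong[OF refl])
    fix m :: "real \<times> real"
    have "{x. (m,x) \<in> S} = - ({..fst m} \<times> {..snd m})" unfolding S_def by auto
    then show "1 - bdf F m = measure F {x. (m,x) \<in> S}" unfolding bdf_def by (simp add: F.compl)
  qed
  also have "\<dots> = (\<integral>x. measure (maxpow G n) {m. (m,x) \<in> S} \<partial>F)"
    by (rule fub[OF mu.bm_axioms F Sb])
  also have "\<dots> = (\<integral>x. marg1 G (fst x) ^ n + marg2 G (snd x) ^ n - bdf G x ^ n \<partial>F)"
  proof (rule Bochner_Integration.integral_cong[OF refl])
    fix x :: "real \<times> real"
    obtain a b where x: "x = (a,b)" by force
    have "{m. (m,x) \<in> S} = ({..<a} \<times> UNIV) \<union> (UNIV \<times> {..<b})" unfolding S_def x by auto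
    moreover have "measure (maxpow G n) (({..<a} \<times> UNIV) \<union> (UNIV \<times> {..<b})) =
       measure (maxpow G n) ({..<a} \<times> UNIV) + measure (maxpow G n) (UNIV \<times> {..<b}) - measure (maxpow G n) ({..<a} \<times> {..<b})"
    proof -
      have "({..<a} \<times> UNIV) \<inter> (UNIV \<times> {..<b}) = {..<a} \<times> {..<b}" by auto
      moreover have f1: "{..<a} \<times> UNIV \<in> fmeasurable (maxpow G n)" by (simp add: mu.fmeasurable_eq_sets)
      moreover have f2: "UNIV \<times> {..<b} \<in> fmeasurable (maxpow G n)" by (simp add: mu.fmeasurable_eq_sets)
      ultimately show ?thesis using measure_Un3[OF f1 f2] by simp
    qed
    ultimately show "measure (maxpow G n) {m. (m,x) \<in> S} = marg1 G (fst x) ^ n + marg2 G (snd x) ^ n - bdf G x ^ n"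
      using G.maxpow_strict[OF n GC] x by simp
  qed
  also have "\<dots> = (\<integral>x. marg1 G (fst x) ^ n \<partial>F) + (\<integral>x. marg2 G (snd x) ^ n \<partial>F) - (\<integral>x. bdf G x ^ n \<partial>F)"
  proof -
    have mb: "bdf G \<in> borel_measurable F"
      unfolding measurable_cong_sets[OF F.S refl] by (rule borel_measurable_continuous_onI[OF GC])
    have m1b: "marg1 G \<in> borel_measurable borel" by (rule borel_measurable_continuous_onI[OF G.marg1_cont[OF GC]])
    have m2b: "marg2 G \<in> borel_measurable borel" by (rule borel_measurable_continuous_onI[OF G.marg2_cont[OF GC]])
    have i1: "integrable F (\<lambda>x. marg1 G (fst x) ^ n)"
      by (rule F.integrable_const_bound[where B=1])
        (use G.marg1_nn G.marg1_le1 m1b in \<open>auto intro!: power_le_one\<close>)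
    have i2: "integrable F (\<lambda>x. marg2 G (snd x) ^ n)"
      by (rule F.integrable_const_bound[where B=1])
        (use G.marg2_nn G.marg2_le1 m2b in \<open>auto intro!: power_le_one\<close>)
    have i3: "integrable F (\<lambda>x. bdf G x ^ n)"
      by (rule F.integrable_const_bound[where B=1])
        (use G.bdf_nn G.bdf_le_1 mb in \<open>auto intro!: power_le_one\<close>)
    show ?thesis using i1 i2 i3 by simp
  qed
  finally show ?thesis .
qed

theorem proposition3p2:
  fixes F G :: "(real \<times> real) measure"
  assumes F_prob: "prob_space F" and F_sets: "sets F = sets borel"
      and G_prob: "prob_space G" and G_sets: "sets G = sets borel"
      and F_cont: "continuous_on UNIV (bdf F)"
      and G_cont: "continuous_on UNIV (bdf G)"
      and tail1: "((\<lambda>t. (1 - marg1 F t) / (1 - marg1 G t)) \<longlongrightarrow> 1) at_top"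
      and tail2: "((\<lambda>t. (1 - marg2 F t) / (1 - marg2 G t)) \<longlongrightarrow> 1) at_top"
      and dom1: "\<And>x. (\<lambda>n::nat. (marg1 F (real n * x)) ^ n) \<longlonglongrightarrow> Phi x"
      and dom2: "\<And>x. (\<lambda>n::nat. (marg2 F (real n * x)) ^ n) \<longlonglongrightarrow> Phi x"
  shows
    "((\<forall>x1 x2. x1 > 0 \<longrightarrow> x2 > 0 \<longrightarrow>
        (\<lambda>n::nat. real n * measure F ({real n * x1<..} \<times> {real n * x2<..})) \<longlonglongrightarrow> 0)
      \<longleftrightarrow> (\<lambda>n::nat. real n * measure F ({real n<..} \<times> {real n<..})) \<longlonglongrightarrow> 0)
   \<and> ((\<lambda>n::nat. real n * measure F ({real n<..} \<times> {real n<..})) \<longlonglongrightarrow> 0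
      \<longleftrightarrow> (\<lambda>n::nat. real n * (\<integral>x. (bdf G x) ^ n \<partial>F)) \<longlonglongrightarrow> 0)
   \<and> ((\<lambda>n::nat. real n * (\<integral>x. (bdf G x) ^ n \<partial>F)) \<longlonglongrightarrow> 0
      \<longleftrightarrow> (\<lambda>n::nat. real n * (\<integral>x. 1 - bdf F x \<partial>(maxpow G n))) \<longlonglongrightarrow> 2)
   \<and> ((\<lambda>n::nat. real n * (\<integral>x. 1 - bdf F x \<partial>(maxpow G n))) \<longlonglongrightarrow> 2
      \<longleftrightarrow> (\<lambda>n::nat. real n * measure F {x. bdf G x > 1 - 1 / real n}) \<longlonglongrightarrow> 0)"
proof -
  have Fb: "bm F" by (rule bm.intro[OF F_prob F_sets])
  have Gb: "bm G" by (rule bm.intro[OF G_prob G_sets])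
  interpret F: bm F by (rule Fb)
  interpret G: bm G by (rule Gb)
  have t1: "\<forall>\<^sub>F n in sequentially. 1 \<le> real n * (1 - marg1 G (real n * (1/10)))"
           "\<forall>\<^sub>F n in sequentially. real n * (1 - marg1 G (real n * 10)) < 1/2"
    by (rule tailG[OF F.marg1_nn F.marg1_le1 G.marg1_le1 dom1 tail1])+
  have t2: "\<forall>\<^sub>F n in sequentially. 1 \<le> real n * (1 - marg2 G (real n * (1/10)))"
           "\<forall>\<^sub>F n in sequentially. real n * (1 - marg2 G (real n * 10)) < 1/2"
    by (rule tailG[OF F.marg2_nn F.marg2_le1 G.marg2_le1 dom2 tail2])+
  note c1 = F.i_ii
  have c2: "(\<lambda>n::nat. real n * measure F ({real n<..} \<times> {real n<..})) \<longlonglongrightarrow> 0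
      \<longleftrightarrow> (\<lambda>n::nat. real n * measure F {x. bdf G x > 1 - 1 / real n}) \<longlonglongrightarrow> 0"
    by (rule ii_v[OF Fb Gb G_cont t1(1) t2(1) t1(2) t2(2)])
  have c3: "(\<lambda>n::nat. real n * (\<integral>x. (bdf G x) ^ n \<partial>F)) \<longlonglongrightarrow> 0
      \<longleftrightarrow> (\<lambda>n::nat. real n * measure F {x. bdf G x > 1 - 1 / real n}) \<longlonglongrightarrow> 0"
    by (rule iii_v[OF Fb Gb G_cont])
  have a1: "(\<lambda>n. real n * (\<integral>x. marg1 G (fst x) ^ n \<partial>F)) \<longlonglongrightarrow> 1"
  proof (rule marg_lemma[OF F_prob F.fst_meas _ G.marg1_cont[OF G_cont] G.marg1_mono _ G.marg1_top tail1])
    fix t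
    have "{x\<in>space F. fst x \<le> t} = {..t} \<times> UNIV" by auto
    then show "measure F {x\<in>space F. fst x \<le> t} = marg1 F t" by (simp add: marg1_def)
  next
    fix t show "0 \<le> marg1 G t \<and> marg1 G t \<le> 1" using G.marg1_nn G.marg1_le1 by auto
  qed
  have a2: "(\<lambda>n. real n * (\<integral>x. marg2 G (snd x) ^ n \<partial>F)) \<longlonglongrightarrow> 1"
  proof (rule marg_lemma[OF F_prob F.snd_meas _ G.marg2_cont[OF G_cont] G.marg2_mono _ G.marg2_top tail2])
    fix t
    have "{x\<in>space F. snd x \<le> t} = UNIV \<times> {..t}" by auto
    then show "measure F {x\<in>space F. snd x \<le> t} = marg2 F t" by (simp add: marg2_def)
  next
    fix t show "0 \<le> marg2 G t \<and> marg2 G t \<le> 1" using G.marg2_nn G.marg2_le1 by auto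
  qed
  define A where "A n = real n * (\<integral>x. marg1 G (fst x) ^ n \<partial>F)" for n :: nat
  define B where "B n = real n * (\<integral>x. marg2 G (snd x) ^ n \<partial>F)" for n :: nat
  define Q where "Q n = real n * (\<integral>x. (bdf G x) ^ n \<partial>F)" for n :: nat
  define H where "H n = real n * (\<integral>x. 1 - bdf F x \<partial>(maxpow G n))" for n :: nat
  have HQ: "H n = A n + B n - Q n" for n
  proof (cases "n = 0")
    case False
    then have "n \<ge> 1" by simp
    then have eq: "(\<integral>m. 1 - bdf F m \<partial>maxpow G n) =
     (\<integral>x. marg1 G (fst x) ^ n \<partial>F) + (\<integral>x. marg2 G (snd x) ^ n \<partial>F) - (\<integral>x. bdf G x ^ n \<partial>F)"
      by (rule ident[OF Fb Gb G_cont])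
    show ?thesis unfolding H_def A_def B_def Q_def by (subst eq) (simp only: distrib_left right_diff_distrib)
  qed (simp add: H_def A_def B_def Q_def)
  have c4: "Q \<longlonglongrightarrow> 0 \<longleftrightarrow> H \<longlonglongrightarrow> 2"
  proof
    assume "Q \<longlonglongrightarrow> 0"
    then have "(\<lambda>n. A n + B n - Q n) \<longlonglongrightarrow> 1 + 1 - 0"
      using a1 a2 unfolding A_def B_def by (intro tendsto_intros)
    then show "H \<longlonglongrightarrow> 2" unfolding HQ[abs_def] by simp
  next
    assume "H \<longlonglongrightarrow> 2"
    then have "(\<lambda>n. A n + B n - H n) \<longlonglongrightarrow> 1 + 1 - 2"
      using a1 a2 unfolding A_def B_def by (intro tendsto_intros)
    then show "Q \<longlonglongrightarrow> 0" by (simp add: HQ)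
  qed
  show ?thesis
    using c1 c2 c3 c4 unfolding Q_def H_def by blast
qed

end
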